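(* Let $(x(t),v(t))$ be the trajectory of an optimal control of $\mathcal Q_N(0,T,x_0,v_0)$. Then for all $0\le t_1\le t_2\le T$, $$\|v(t_2)-\bar v\|_N^2\le C_\lambda\|v(t_1)-\bar v\|_N^2,\qquad C_\lambda=\begin{cases}1+\lambda^{-1/2},&\lambda\le1,\\ 1+\lambda^{1/2},&\lambda>1.\end{cases}$$
   Context: Fix integers $D\ge1$, $N\ge1$, a horizon $T>0$, a weight $\lambda>0$ and a target velocity $\bar v\in\mathbb R^D$. The interaction kernel $\Psi:\mathbb R^D\times\mathbb R^D\to\mathbb R$ is Lipschitz continuous, symmetric ($\Psi(x,y)=\Psi(y,x)$), nonnegative and bounded ($0\le\Psi\le C_\Psi$). The admissible control set $\mathcal F$ consists of Carathéodory functions $f:[0,T]\times\mathbb R^{2D}\to\mathbb R^D$ with $f(t,\cdot)\in W^{1,\infty}_{loc}(\mathbb R^{2D})$ and $|f(t,0)|+\|f(t,\cdot)\|_{Lip}\le C_B$ for a.e. $t$, where the constant $C_B$ is assumed large enough ($C_B\ge\lambda^{-1/2}(1+|\bar v|)$) that the linear feedback $(x,v)\mapsto-\lambda^{-1/2}(v-\bar v)$ is admissible; admissible controls on a subinterval $[a,T]$ are defined analogously. Given $f\in\mathcal F$ and initial data $x_0=(x_{10},\dots,x_{N0})$, $v_0=(v_{10},\dots,v_{N0})\in(\mathbb R^D)^N$, the state $x(t)=(x_i(t))_{i=1}^N$, $v(t)=(v_i(t))_{i=1}^N$ solves $\dot x_i=v_i$, $\dot v_i=\frac1N\sum_{j=1}^N\Psi(x_i,x_j)(v_j-v_i)+f_i(t)$,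 with $f_i(t):=f(t,x_i(t),v_i(t))$, $x_i(0)=x_{i0}$, $v_i(0)=v_{i0}$. For $w=(w_1,\dots,w_N)\in(\mathbb R^D)^N$ set $\|w\|_N^2=\frac1N\sum_{i=1}^N|w_i|^2$, and write $\|v-\bar v\|_N^2=\frac1N\sum_i|v_i-\bar v|^2$, $f(t)=(f_1(t),\dots,f_N(t))$. The problem $\mathcal Q_N(0,T,x_0,v_0)$ is to minimize $J_N(f)=\int_0^T\|v(t)-\bar v\|_N^2+\lambda\|f(t)\|_N^2\,dt$ over $f\in\mathcal F$; a minimizer is an optimal control and its trajectory the optimal solution. The problem $\mathcal Q_N(a,T,x(a),v(a))$ on $[a,T]$ with data at time $a$ is defined analogously. *)

theory Defs
  imports "HOL-Analysis.Analysis"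
begin

text \<open>Agents are indexed by i < N; states x, v : real => nat => 'a, where
  'a :: euclidean_space plays the role of R^D. Controls are functions
  f : real => ('a * 'a) => 'a (feedback laws on R^{2D}).\<close>

definition normN_sq :: "nat \<Rightarrow> (nat \<Rightarrow> 'a::real_normed_vector) \<Rightarrow> real" where
  "normN_sq N w = (1 / real N) * (\<Sum>i<N. (norm (w i))\<^sup>2)"

text \<open>Admissible controls on [a,T]: Caratheodory (measurable in t, Lipschitz hence
  continuous and W^{1,inf}_loc in the state for a.e. t), with |f(t,0)| + Lip(f(t,.)) <= C_B a.e.\<close>
definition admissible ::
  "real \<Rightarrow> real \<Rightarrow> real \<Rightarrow> (real \<Rightarrow> ('a::euclidean_space \<times> 'a) \<Rightarrow> 'a) \<Rightarrow> bool" where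
  "admissible CB a T f \<longleftrightarrow>
     (\<forall>z. (\<lambda>t. f t z) \<in> borel_measurable (lebesgue_on {a..T})) \<and>
     (AE t in lebesgue_on {a..T}. \<exists>L. L-lipschitz_on UNIV (f t) \<and> norm (f t 0) + L \<le> CB)"

definition cs_rhs ::
  "('a::euclidean_space \<Rightarrow> 'a \<Rightarrow> real) \<Rightarrow> nat \<Rightarrow> (real \<Rightarrow> ('a \<times> 'a) \<Rightarrow> 'a)
   \<Rightarrow> (real \<Rightarrow> nat \<Rightarrow> 'a) \<Rightarrow> (real \<Rightarrow> nat \<Rightarrow> 'a) \<Rightarrow> nat \<Rightarrow> real \<Rightarrow> 'a" where
  "cs_rhs \<Psi> N f x v i s =
     (1 / real N) *\<^sub>R (\<Sum>j<N. \<Psi> (x s i) (x s j) *\<^sub>R (v s j - v s i)) + f s (x s i, v s i)"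

definition is_traj ::
  "('a::euclidean_space \<Rightarrow> 'a \<Rightarrow> real) \<Rightarrow> nat \<Rightarrow> real \<Rightarrow> real \<Rightarrow> (real \<Rightarrow> ('a \<times> 'a) \<Rightarrow> 'a)
   \<Rightarrow> (nat \<Rightarrow> 'a) \<Rightarrow> (nat \<Rightarrow> 'a) \<Rightarrow> (real \<Rightarrow> nat \<Rightarrow> 'a) \<Rightarrow> (real \<Rightarrow> nat \<Rightarrow> 'a) \<Rightarrow> bool" where
  "is_traj \<Psi> N a T f xa va x v \<longleftrightarrow>
     (\<forall>t\<in>{a..T}. \<forall>i<N.
        ((\<lambda>s. v s i) has_integral (x t i - xa i)) {a..t} \<and>
        ((\<lambda>s. cs_rhs \<Psi> N f x v i s) has_integral (v t i - va i)) {a..t})"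

definition cost ::
  "nat \<Rightarrow> real \<Rightarrow> real \<Rightarrow> real \<Rightarrow> 'a::euclidean_space \<Rightarrow> (real \<Rightarrow> ('a \<times> 'a) \<Rightarrow> 'a)
   \<Rightarrow> (real \<Rightarrow> nat \<Rightarrow> 'a) \<Rightarrow> (real \<Rightarrow> nat \<Rightarrow> 'a) \<Rightarrow> real" where
  "cost N lam a T vbar f x v =
     integral {a..T} (\<lambda>t. normN_sq N (\<lambda>i. v t i - vbar)
                          + lam * normN_sq N (\<lambda>i. f t (x t i, v t i)))"

definition optimal ::
  "('a::euclidean_space \<Rightarrow> 'a \<Rightarrow> real) \<Rightarrow> nat \<Rightarrow> real \<Rightarrow> real \<Rightarrow> real \<Rightarrow> 'a \<Rightarrow> real
   \<Rightarrow> (nat \<Rightarrow> 'a) \<Rightarrow> (nat \<Rightarrow> 'a) \<Rightarrow> (real \<Rightarrow> ('a \<times> 'a) \<Rightarrow> 'a)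
   \<Rightarrow> (real \<Rightarrow> nat \<Rightarrow> 'a) \<Rightarrow> (real \<Rightarrow> nat \<Rightarrow> 'a) \<Rightarrow> bool" where
  "optimal \<Psi> N lam a T vbar CB xa va f x v \<longleftrightarrow>
     admissible CB a T f \<and> is_traj \<Psi> N a T f xa va x v \<and>
     (\<forall>g y w. admissible CB a T g \<longrightarrow> is_traj \<Psi> N a T g xa va y w \<longrightarrow>
        cost N lam a T vbar f x v \<le> cost N lam a T vbar g y w)"

end

theory Submission
  imports Defs
begin




lemma bilinear_inner_my: "bilinear (inner :: 'b::real_inner \<Rightarrow> 'b \<Rightarrow> real)"
  by (auto simp: bilinear_def linear_iff inner_add_left inner_add_right)

lemma energy_identity:
  fixes V h :: "real \<Rightarrow> 'b::euclidean_space"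
  assumes ab: "a \<le> b"
    and hint: "h absolutely_integrable_on {a..b}"
    and hV: "\<And>t. t \<in> {a..b} \<Longrightarrow> (h has_integral (V t - V a)) {a..t}"
  shows "((\<lambda>s. 2 * inner (V s) (h s)) has_integral ((norm (V b))\<^sup>2 - (norm (V a))\<^sup>2)) {a..b}"
proof -
  have hi: "h integrable_on {a..b}" and hn: "(\<lambda>s. norm (h s)) integrable_on {a..b}"
    using hint absolutely_integrable_on_def by blast+
  have Veq: "V t = V a + integral {a..t} h" if "t \<in> {a..b}" for t
    using hV[OF that] by (simp add: integral_unique)
  have Vc: "continuous_on {a..b} V"
  proof -
    have "continuous_on {a..b} (\<lambda>t. V a + integral {a..t} h)"
      by (intro continuous_intros indefinite_integral_continuous_1 hi)
    then show ?thesis using Veq continuous_on_cong by (metis (no_types, lifting))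
  qed
  have qabs: "(\<lambda>s. inner (V s) (h s)) absolutely_integrable_on {a..b}"
  proof -
    have Vm: "V \<in> borel_measurable (lebesgue_on {a..b})"
      by (rule continuous_imp_measurable_on_sets_lebesgue[OF Vc]) simp
    have Vb: "bounded (V ` {a..b})"
      by (rule compact_imp_bounded[OF compact_continuous_image[OF Vc compact_Icc]])
    show ?thesis
      by (rule absolutely_integrable_bounded_measurable_product[OF bilinear_inner_my Vm _ Vb hint]) simp
  qed
  have qi: "(\<lambda>s. 2 * inner (V s) (h s)) integrable_on {a..b}"
    using integrable_on_cmult_left[of "\<lambda>s. inner (V s) (h s)" "{a..b}" 2] qabs
    by (simp add: absolutely_integrable_on_def)
  define D where "D t = (norm (V t))\<^sup>2 - (norm (V a))\<^sup>2 - integral {a..t} (\<lambda>s. 2 * inner (V s) (h s))" for t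
  have Dstep: "D w - D u = integral {u..w} (\<lambda>s. inner (V w + V u - 2 *\<^sub>R V s) (h s))"
    if uw: "a \<le> u" "u \<le> w" "w \<le> b" for u w
  proof -
    have qiw: "(\<lambda>s. 2 * inner (V s) (h s)) integrable_on {a..w}"
      using qi integrable_on_subinterval uw by fastforce
    have qiuw: "(\<lambda>s. 2 * inner (V s) (h s)) integrable_on {u..w}"
      using qi integrable_on_subinterval uw by fastforce
    have hiw: "h integrable_on {a..w}"
      using hi integrable_on_subinterval uw by fastforce
    have hiuw: "h integrable_on {u..w}"
      using hi integrable_on_subinterval uw by fastforce
    have c1: "integral {a..w} (\<lambda>s. 2 * inner (V s) (h s)) = integral {a..u} (\<lambda>s. 2 * inner (V s) (h s)) + integral {u..w} (\<lambda>s. 2 * inner (V s) (h s))"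
      using Henstock_Kurzweil_Integration.integral_combine[OF uw(1,2) qiw] by simp
    have c2: "integral {a..w} h = integral {a..u} h + integral {u..w} h"
      using Henstock_Kurzweil_Integration.integral_combine[OF uw(1,2) hiw] by simp
    have VwVu: "V w - V u = integral {u..w} h"
      using Veq[of w] Veq[of u] uw c2 by auto
    have "(norm (V w))\<^sup>2 - (norm (V u))\<^sup>2 = inner (V w + V u) (V w - V u)"
      by (simp add: power2_norm_eq_inner inner_add inner_diff inner_commute)
    also have "\<dots> = integral {u..w} (\<lambda>s. inner (V w + V u) (h s))"
      using VwVu integral_linear[OF hiuw bounded_linear_inner_right[of "V w + V u"]]
      by (simp add: o_def)
    finally have n: "(norm (V w))\<^sup>2 - (norm (V u))\<^sup>2 = integral {u..w} (\<lambda>s. inner (V w + V u) (h s))" .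
    have i1: "(\<lambda>s. inner (V w + V u) (h s)) integrable_on {u..w}"
      using integrable_linear[OF hiuw bounded_linear_inner_right[of "V w + V u"]] by (simp add: o_def)
    have "D w - D u = integral {u..w} (\<lambda>s. inner (V w + V u) (h s)) - integral {u..w} (\<lambda>s. 2 * inner (V s) (h s))"
      unfolding D_def using n c1 by simp
    also have "\<dots> = integral {u..w} (\<lambda>s. inner (V w + V u) (h s) - 2 * inner (V s) (h s))"
      using integral_diff[OF i1 qiuw] by simp
    also have "\<dots> = integral {u..w} (\<lambda>s. inner (V w + V u - 2 *\<^sub>R V s) (h s))"
      by (simp add: inner_diff_left)
    finally show ?thesis .
  qed
  have Dzero: "D b = 0"
  proof (rule ccontr)
    assume nz: "D b \<noteq> 0"
    define H where "H = integral {a..b} (\<lambda>s. norm (h s))"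
    have H0: "0 \<le> H" unfolding H_def by (rule integral_nonneg[OF hn]) auto
    define e where "e = \<bar>D b\<bar> / (H + 1)"
    have e0: "e > 0" using nz H0 by (simp add: e_def)
    have uc: "uniformly_continuous_on {a..b} V"
      by (rule compact_uniformly_continuous[OF Vc compact_Icc])
    obtain d where d0: "d > 0" and dV: "\<And>s s'. s \<in> {a..b} \<Longrightarrow> s' \<in> {a..b} \<Longrightarrow> dist s' s < d \<Longrightarrow> dist (V s') (V s) < e / 4"
      using uc e0 unfolding uniformly_continuous_on_def
      by (metis divide_pos_pos zero_less_numeral)
    have g: "gauge (\<lambda>x. ball x (d / 2))" using d0 by (simp add: gauge_def)
    obtain p where p: "p tagged_division_of {a..b}" and pf: "(\<lambda>x. ball x (d / 2)) fine p"
      using fine_division_exists_real[OF g] by blast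
    have add: "(\<Sum>(x,K)\<in>p. D (Sup K) - D (Inf K)) = D b - D a"
      by (rule additive_tagged_division_1[OF ab p])
    have Da: "D a = 0" unfolding D_def by simp
    have bnd: "\<bar>D (Sup K) - D (Inf K)\<bar> \<le> e * integral K (\<lambda>s. norm (h s))" if xK: "(x,K) \<in> p" for x K
    proof -
      obtain u w where K: "K = cbox u w" using p xK by blast
      have xin: "x \<in> K" using p xK by blast
      have Ksub: "K \<subseteq> {a..b}" using p xK by blast
      have Kball: "K \<subseteq> ball x (d/2)" using pf xK by (auto simp: fine_def)
      have uw: "u \<le> w" using xin K by auto
      have Kuw: "K = {u..w}" using K by simp
      have au: "a \<le> u" "w \<le> b" using Ksub Kuw uw by auto
      have SI: "Sup K = w" "Inf K = u" using Kuw uw by auto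
      have close: "norm (V s - V x) \<le> e / 4" if "s \<in> {u..w}" for s
      proof -
        have "s \<in> ball x (d/2)" using Kball Kuw that by auto
        hence "dist s x < d" using d0 by (simp add: dist_commute)
        moreover have "s \<in> {a..b}" "x \<in> {a..b}" using that Kuw Ksub xin by auto
        ultimately show ?thesis using dV[of x s] by (simp add: dist_norm)
      qed
      have hiuw: "(\<lambda>s. norm (h s)) integrable_on {u..w}"
        using hn integrable_on_subinterval au by fastforce
      have hiuw': "h integrable_on {u..w}"
        using hi integrable_on_subinterval au by fastforce
      have Vcuw: "continuous_on {u..w} V" using Vc continuous_on_subset au by fastforce
      have absint: "(\<lambda>s. inner (V w + V u - 2 *\<^sub>R V s) (h s)) absolutely_integrable_on {u..w}"
      proof -
        have habs: "h absolutely_integrable_on {u..w}"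
          using hint absolutely_integrable_on_subinterval au by fastforce
        have c: "continuous_on {u..w} (\<lambda>s. V w + V u - 2 *\<^sub>R V s)"
          by (intro continuous_intros Vcuw)
        have Vm: "(\<lambda>s. V w + V u - 2 *\<^sub>R V s) \<in> borel_measurable (lebesgue_on {u..w})"
          by (rule continuous_imp_measurable_on_sets_lebesgue[OF c]) simp
        have Vb: "bounded ((\<lambda>s. V w + V u - 2 *\<^sub>R V s) ` {u..w})"
          by (rule compact_imp_bounded[OF compact_continuous_image[OF c compact_Icc]])
        show ?thesis
          by (rule absolutely_integrable_bounded_measurable_product[OF bilinear_inner_my Vm _ Vb habs]) simp
      qed
      have "\<bar>D (Sup K) - D (Inf K)\<bar> = norm (integral {u..w} (\<lambda>s. inner (V w + V u - 2 *\<^sub>R V s) (h s)))"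
        using Dstep[OF au(1) uw au(2)] SI by simp
      also have "\<dots> \<le> integral {u..w} (\<lambda>s. e * norm (h s))"
      proof (rule integral_norm_bound_integral)
        show "(\<lambda>s. inner (V w + V u - 2 *\<^sub>R V s) (h s)) integrable_on {u..w}"
          using absint by (simp add: absolutely_integrable_on_def)
        show "(\<lambda>s. e * norm (h s)) integrable_on {u..w}"
          using integrable_on_cmult_left[OF hiuw, of e] by simp
        fix s assume s: "s \<in> {u..w}"
        have w1: "norm (V w - V x) \<le> e/4" using close[of w] uw by auto
        have u1: "norm (V u - V x) \<le> e/4" using close[of u] uw by auto
        have s1: "norm (V s - V x) \<le> e/4" using close[OF s] .
        have eqV: "V w + V u - 2 *\<^sub>R V s = (V w - V x) + (V u - V x) - 2 *\<^sub>R (V s - V x)"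
          by (simp add: algebra_simps scaleR_2)
        have "norm (V w + V u - 2 *\<^sub>R V s) \<le> norm (V w - V x) + norm (V u - V x) + 2 * norm (V s - V x)"
        proof -
          have "norm ((V w - V x) + (V u - V x) - 2 *\<^sub>R (V s - V x)) \<le> norm ((V w - V x) + (V u - V x)) + norm (2 *\<^sub>R (V s - V x))"
            by (rule norm_triangle_ineq4)
          moreover have "norm ((V w - V x) + (V u - V x)) \<le> norm (V w - V x) + norm (V u - V x)"
            by (rule norm_triangle_ineq)
          moreover have "norm (2 *\<^sub>R (V s - V x)) = 2 * norm (V s - V x)" by simp
          ultimately show ?thesis unfolding eqV by linarith
        qed
        hence nb: "norm (V w + V u - 2 *\<^sub>R V s) \<le> e" using w1 u1 s1 by linarith
        have "norm (inner (V w + V u - 2 *\<^sub>R V s) (h s)) \<le> norm (V w + V u - 2 *\<^sub>R V s) * norm (h s)"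
          using Cauchy_Schwarz_ineq2 by (simp add: real_norm_def)
        also have "\<dots> \<le> e * norm (h s)" using nb by (simp add: mult_right_mono)
        finally show "norm (inner (V w + V u - 2 *\<^sub>R V s) (h s)) \<le> e * norm (h s)" .
      qed
      also have "\<dots> = e * integral K (\<lambda>s. norm (h s))" using Kuw by simp
      finally show ?thesis .
    qed
    have "\<bar>D b\<bar> = \<bar>\<Sum>(x,K)\<in>p. D (Sup K) - D (Inf K)\<bar>" using add Da by simp
    also have "\<dots> \<le> (\<Sum>(x,K)\<in>p. \<bar>D (Sup K) - D (Inf K)\<bar>)"
      by (rule sum_abs[THEN order_trans]) (simp add: case_prod_unfold)
    also have "\<dots> \<le> (\<Sum>(x,K)\<in>p. e * integral K (\<lambda>s. norm (h s)))"
      by (rule sum_mono) (use bnd in auto)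
    also have "\<dots> = e * (\<Sum>(x,K)\<in>p. integral K (\<lambda>s. norm (h s)))"
      by (simp add: sum_distrib_left case_prod_unfold)
    also have "(\<Sum>(x,K)\<in>p. integral K (\<lambda>s. norm (h s))) = H"
      unfolding H_def using integral_combine_tagged_division_topdown[of "\<lambda>s. norm (h s)" a b p] hn p by simp
    finally have "\<bar>D b\<bar> \<le> e * H" .
    also have "e * H < \<bar>D b\<bar>"
    proof -
      have "e * H = \<bar>D b\<bar> * (H / (H+1))" by (simp add: e_def)
      also have "\<dots> < \<bar>D b\<bar> * 1" using nz H0 by (intro mult_strict_left_mono) auto
      finally show ?thesis by simp
    qed
    finally show False by simp
  qed
  have "((\<lambda>s. 2 * inner (V s) (h s)) has_integral integral {a..b} (\<lambda>s. 2 * inner (V s) (h s))) {a..b}"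
    using qi by blast
  moreover have "integral {a..b} (\<lambda>s. 2 * inner (V s) (h s)) = (norm (V b))\<^sup>2 - (norm (V a))\<^sup>2"
    using Dzero unfolding D_def by simp
  ultimately show ?thesis by simp
qed




lemma cont_G:
  fixes G :: "(nat \<Rightarrow> 'b::real_normed_vector) \<Rightarrow> nat \<Rightarrow> 'c::real_normed_vector"
  assumes lip: "\<And>z z'. (\<Sum>i<N. norm (G z i - G z' i)) \<le> K * (\<Sum>i<N. norm (z i - z' i))"
    and c: "\<And>j. j < N \<Longrightarrow> continuous_on S (\<lambda>t. \<phi> t j)" and i: "i < N"
  shows "continuous_on S (\<lambda>t. G (\<phi> t) i)"
  unfolding continuous_on_def
proof
  fix x assume x: "x \<in> S"
  have "((\<lambda>t. K * (\<Sum>j<N. norm (\<phi> t j - \<phi> x j))) \<longlongrightarrow> K * (\<Sum>j<N. norm (\<phi> x j - \<phi> x j))) (at x within S)"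
    using c x by (intro tendsto_intros) (auto simp: continuous_on_def)
  hence t0: "((\<lambda>t. K * (\<Sum>j<N. norm (\<phi> t j - \<phi> x j))) \<longlongrightarrow> 0) (at x within S)" by simp
  have le: "norm (G (\<phi> t) i - G (\<phi> x) i) \<le> K * (\<Sum>j<N. norm (\<phi> t j - \<phi> x j))" for t
  proof -
    have "norm (G (\<phi> t) i - G (\<phi> x) i) \<le> (\<Sum>i<N. norm (G (\<phi> t) i - G (\<phi> x) i))"
      using i by (intro member_le_sum) auto
    also have "\<dots> \<le> K * (\<Sum>j<N. norm (\<phi> t j - \<phi> x j))" by (rule lip)
    finally show ?thesis .
  qed
  have "((\<lambda>t. G (\<phi> t) i - G (\<phi> x) i) \<longlongrightarrow> 0) (at x within S)"
    by (rule Lim_null_comparison[OF always_eventually t0]) (use le in auto)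
  then show "((\<lambda>t. G (\<phi> t) i) \<longlongrightarrow> G (\<phi> x) i) (at x within S)"
    using Lim_null by blast
qed

lemma picard:
  fixes G :: "(nat \<Rightarrow> 'b::banach) \<Rightarrow> nat \<Rightarrow> 'b" and z0 :: "nat \<Rightarrow> 'b" and a b K :: real
  assumes ab: "a \<le> b" and K0: "0 \<le> K"
    and lip: "\<And>z z'. (\<Sum>i<N. norm (G z i - G z' i)) \<le> K * (\<Sum>i<N. norm (z i - z' i))"
  shows "\<exists>\<phi>. (\<forall>i<N. continuous_on {a..b} (\<lambda>t. \<phi> t i)) \<and>
             (\<forall>t\<in>{a..b}. \<forall>i<N. ((\<lambda>s. G (\<phi> s) i) has_integral (\<phi> t i - z0 i)) {a..t})"
proof -
  define P where "P = (\<lambda>\<psi>::real \<Rightarrow> nat \<Rightarrow> 'b. \<lambda>t i. z0 i + integral {a..t} (\<lambda>s. G (\<psi> s) i))"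
  define phi where "phi k = (P ^^ k) (\<lambda>t. z0)" for k
  have phiS: "phi (Suc k) t i = z0 i + integral {a..t} (\<lambda>s. G (phi k s) i)" for k t i
    by (simp add: phi_def P_def)
  have phi0: "phi 0 t = z0" for t by (simp add: phi_def)
  have cphi: "continuous_on {a..b} (\<lambda>t. phi k t i)" if "i<N" for k i
    using that
  proof (induction k arbitrary: i)
    case 0 then show ?case by (simp add: phi0)
  next
    case (Suc k)
    have "continuous_on {a..b} (\<lambda>t. z0 i + integral {a..t} (\<lambda>s. G (phi k s) i))"
      by (intro continuous_intros indefinite_integral_continuous_1 integrable_continuous_real
          cont_G[OF lip Suc.IH Suc.prems])
    then show ?case by (simp add: phiS)
  qed
  have Gc: "continuous_on {a..b} (\<lambda>s. G (phi k s) i)" if "i<N" for k i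
    by (rule cont_G[OF lip cphi that])
  have Gct: "continuous_on {a..t} (\<lambda>s. G (phi k s) i)" if "i<N" "t \<in> {a..b}" for k i t
    by (rule continuous_on_subset[OF Gc[OF that(1)]]) (use that(2) in auto)
  have Gi: "(\<lambda>s. G (phi k s) i) integrable_on {a..t}" if "i<N" "t \<in> {a..b}" for k i t
    by (rule integrable_continuous_real[OF Gct[OF that]])
  define M where "M = (b - a) * (\<Sum>i<N. norm (G z0 i))"
  have M0: "0 \<le> M" unfolding M_def using ab by (intro mult_nonneg_nonneg sum_nonneg) auto
  define F where "F k t = M * (K * (t - a))^k / fact k" for k t
  have est: "(\<Sum>i<N. norm (phi (Suc k) t i - phi k t i)) \<le> F k t" if "t \<in> {a..b}" for k t
    using that
  proof (induction k arbitrary: t)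
    case 0
    have "phi 1 t i - phi 0 t i = (t - a) *\<^sub>R G z0 i" for i
      using 0 by (simp add: phiS[of 0] phi0)
    then have "(\<Sum>i<N. norm (phi 1 t i - phi 0 t i)) = (t - a) * (\<Sum>i<N. norm (G z0 i))"
      using 0 by (simp add: sum_distrib_left)
    also have "\<dots> \<le> M" unfolding M_def using 0 by (intro mult_right_mono sum_nonneg) auto
    finally show ?case by (simp add: F_def)
  next
    case (Suc k)
    have tab: "{a..t} \<subseteq> {a..b}" "a \<le> t" using Suc.prems by auto
    have dcont: "continuous_on {a..t} (\<lambda>s. G (phi (Suc k) s) i - G (phi k s) i)" if "i<N" for i
      by (intro continuous_intros Gct that Suc.prems)
    have diff: "phi (Suc (Suc k)) t i - phi (Suc k) t i = integral {a..t} (\<lambda>s. G (phi (Suc k) s) i - G (phi k s) i)" if "i<N" for i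
      using integral_diff[OF Gi[OF that Suc.prems] Gi[OF that Suc.prems]]
      by (simp add: phiS[of "Suc k"] phiS[of k])
    have "(\<Sum>i<N. norm (phi (Suc (Suc k)) t i - phi (Suc k) t i))
        \<le> (\<Sum>i<N. integral {a..t} (\<lambda>s. norm (G (phi (Suc k) s) i - G (phi k s) i)))"
    proof (rule sum_mono)
      fix i assume "i \<in> {..<N}" hence i: "i < N" by simp
      show "norm (phi (Suc (Suc k)) t i - phi (Suc k) t i) \<le> integral {a..t} (\<lambda>s. norm (G (phi (Suc k) s) i - G (phi k s) i))"
        unfolding diff[OF i]
        by (rule integral_norm_bound_integral)
           (auto intro!: integrable_continuous_real continuous_intros dcont[OF i])
    qed
    also have "\<dots> = integral {a..t} (\<lambda>s. \<Sum>i<N. norm (G (phi (Suc k) s) i - G (phi k s) i))"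
      by (rule integral_sum[symmetric]) (auto intro!: integrable_continuous_real continuous_intros dcont)
    also have "\<dots> \<le> integral {a..t} (\<lambda>s. K * F k s)"
    proof (rule integral_le)
      show "(\<lambda>s. \<Sum>i<N. norm (G (phi (Suc k) s) i - G (phi k s) i)) integrable_on {a..t}"
        by (auto intro!: integrable_continuous_real continuous_intros dcont)
      show "(\<lambda>s. K * F k s) integrable_on {a..t}"
        unfolding F_def by (auto intro!: integrable_continuous_real continuous_intros)
      fix s assume s: "s \<in> {a..t}"
      have "(\<Sum>i<N. norm (G (phi (Suc k) s) i - G (phi k s) i)) \<le> K * (\<Sum>i<N. norm (phi (Suc k) s i - phi k s i))"
        by (rule lip)
      also have "\<dots> \<le> K * F k s"
        using Suc.IH[of s] s tab K0 by (intro mult_left_mono) auto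
      finally show "(\<Sum>i<N. norm (G (phi (Suc k) s) i - G (phi k s) i)) \<le> K * F k s" .
    qed
    also have "\<dots> = F (Suc k) t"
    proof -
      have "((\<lambda>s. K * F k s) has_integral (F (Suc k) t - F (Suc k) a)) {a..t}"
      proof (rule fundamental_theorem_of_calculus[OF tab(2)])
        fix s assume "s \<in> {a..t}"
        have d0: "((\<lambda>s. K * (s - a)) has_real_derivative K) (at s within {a..t})"
          by (auto intro!: derivative_eq_intros)
        have d1: "((\<lambda>s. M * (K * (s - a)) ^ Suc k / fact (Suc k)) has_real_derivative
                   M * (of_nat (Suc k) * (K * (K * (s - a)) ^ (Suc k - Suc 0))) / fact (Suc k)) (at s within {a..t})"
          by (intro DERIV_cdivide DERIV_cmult DERIV_power d0)
        have eqd: "M * (of_nat (Suc k) * (K * (K * (s - a)) ^ (Suc k - Suc 0))) / fact (Suc k) = K * F k s"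
        proof -
          have fs: "(fact (Suc k)::real) = real (Suc k) * fact k" by simp
          have "real (Suc k) \<noteq> 0" "(fact k::real) \<noteq> 0" by auto
          then show ?thesis unfolding fs F_def by (simp add: field_simps del: of_nat_Suc)
        qed
        have "((\<lambda>s. F (Suc k) s) has_real_derivative K * F k s) (at s within {a..t})"
          using d1 unfolding eqd by (simp add: F_def)
        then show "((\<lambda>s. F (Suc k) s) has_vector_derivative K * F k s) (at s within {a..t})"
          by (simp add: has_real_derivative_iff_has_vector_derivative)
      qed
      moreover have "F (Suc k) a = 0" by (simp add: F_def)
      ultimately have "((\<lambda>s. K * F k s) has_integral F (Suc k) t) {a..t}" by simp
      then show ?thesis by (rule integral_unique)
    qed
    finally show ?case .
  qed
  define d where "d k t i = phi (Suc k) t i - phi k t i" for k t i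
  have tele: "phi n t i = z0 i + (\<Sum>k<n. d k t i)" for n t i
    by (induction n) (auto simp: d_def phi0)
  define S where "S k = M * (K * (b - a))^k / fact k" for k
  have Ssum: "summable S"
  proof -
    have "summable (\<lambda>k. M * (inverse (fact k) * (K * (b - a))^k))"
      by (intro summable_mult summable_exp)
    moreover have "(\<lambda>k. M * (inverse (fact k) * (K * (b - a))^k)) = S"
      by (rule ext) (simp add: S_def field_simps)
    ultimately show ?thesis by simp
  qed
  have dS: "norm (d k t i) \<le> S k" if "t \<in> {a..b}" "i < N" for k t i
  proof -
    have "norm (d k t i) \<le> (\<Sum>i<N. norm (phi (Suc k) t i - phi k t i))"
      unfolding d_def using that(2) by (intro member_le_sum) auto
    also have "\<dots> \<le> F k t" by (rule est[OF that(1)])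
    also have "\<dots> \<le> S k" unfolding F_def S_def using that(1) K0 M0
      by (intro divide_right_mono mult_left_mono power_mono mult_left_mono) auto
    finally show ?thesis .
  qed
  define \<phi> where "\<phi> t i = z0 i + (\<Sum>k. d k t i)" for t i
  have ul: "uniform_limit {a..b} (\<lambda>n t. phi n t i) (\<lambda>t. \<phi> t i) sequentially" if i: "i < N" for i
  proof -
    have W: "uniform_limit {a..b} (\<lambda>n t. \<Sum>k<n. d k t i) (\<lambda>t. \<Sum>k. d k t i) sequentially"
      by (rule Weierstrass_m_test[OF _ Ssum]) (rule dS[OF _ i])
    have "uniform_limit {a..b} (\<lambda>n t. z0 i + (\<Sum>k<n. d k t i)) (\<lambda>t. z0 i + (\<Sum>k. d k t i)) sequentially"
      by (rule uniform_limit_add[OF uniform_limit_const W])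
    then show ?thesis unfolding \<phi>_def tele by simp
  qed
  have cphil: "continuous_on {a..b} (\<lambda>t. \<phi> t i)" if i: "i < N" for i
    by (rule uniform_limit_theorem[OF always_eventually ul[OF i]]) (auto intro: cphi[OF i])
  have ulG: "uniform_limit {a..b} (\<lambda>n s. G (phi n s) i) (\<lambda>s. G (\<phi> s) i) sequentially" if i: "i < N" for i
  proof (rule uniform_limitI)
    fix e :: real assume e: "e > 0"
    define e' where "e' = e / (K * real N + 1)"
    have KN: "0 \<le> K * real N" using K0 by simp
    have e': "e' > 0" unfolding e'_def using e KN by simp
    have "\<forall>j\<in>{..<N}. \<forall>\<^sub>F n in sequentially. \<forall>t\<in>{a..b}. dist (phi n t j) (\<phi> t j) < e'"
      using ul uniform_limitD e' by blast
    then have ev: "\<forall>\<^sub>F n in sequentially. \<forall>j\<in>{..<N}. \<forall>t\<in>{a..b}. dist (phi n t j) (\<phi> t j) < e'"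
      by (intro eventually_ball_finite) auto
    show "\<forall>\<^sub>F n in sequentially. \<forall>t\<in>{a..b}. dist (G (phi n t) i) (G (\<phi> t) i) < e"
    proof (rule eventually_mono[OF ev], intro ballI)
      fix n t assume H: "\<forall>j\<in>{..<N}. \<forall>t\<in>{a..b}. dist (phi n t j) (\<phi> t j) < e'" and t: "t \<in> {a..b}"
      have "dist (G (phi n t) i) (G (\<phi> t) i) \<le> (\<Sum>i<N. norm (G (phi n t) i - G (\<phi> t) i))"
        unfolding dist_norm using i by (intro member_le_sum) auto
      also have "\<dots> \<le> K * (\<Sum>j<N. norm (phi n t j - \<phi> t j))" by (rule lip)
      also have "\<dots> \<le> K * (real N * e')"
      proof -
        have "(\<Sum>j<N. norm (phi n t j - \<phi> t j)) \<le> of_nat (card {..<N}) * e'"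
          by (rule sum_bounded_above) (use H t in \<open>auto simp: dist_norm less_imp_le\<close>)
        then show ?thesis using K0 by (intro mult_left_mono) auto
      qed
      also have "\<dots> < e"
      proof -
        have "K * (real N * e') = (K * real N) * e / (K * real N + 1)" unfolding e'_def by simp
        also have "\<dots> < e" using e KN by (simp add: field_simps)
        finally show ?thesis .
      qed
      finally show "dist (G (phi n t) i) (G (\<phi> t) i) < e" .
    qed
  qed
  have sol: "((\<lambda>s. G (\<phi> s) i) has_integral (\<phi> t i - z0 i)) {a..t}" if t: "t \<in> {a..b}" and i: "i < N" for t i
  proof -
    have sub: "{a..t} \<subseteq> {a..b}" using t by auto
    have ult: "uniform_limit {a..t} (\<lambda>n s. G (phi n s) i) (\<lambda>s. G (\<phi> s) i) sequentially"
      by (rule uniform_limit_on_subset[OF ulG[OF i] sub])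
    obtain I J where I: "\<And>n. ((\<lambda>s. G (phi n s) i) has_integral I n) {a..t}"
      and J: "((\<lambda>s. G (\<phi> s) i) has_integral J) {a..t}" and IJ: "I \<longlonglongrightarrow> J"
      by (rule uniform_limit_integral[OF ult]) (auto intro: Gct[OF i t])
    have e1: "phi (Suc n) t i = z0 i + I n" for n
      using I[of n] by (simp add: phiS integral_unique)
    have l1: "(\<lambda>n. phi (Suc n) t i) \<longlonglongrightarrow> z0 i + J"
      unfolding e1 by (intro tendsto_intros IJ)
    have l2: "(\<lambda>n. phi n t i) \<longlonglongrightarrow> \<phi> t i"
      by (rule tendsto_uniform_limitI[OF ul[OF i] t])
    have "(\<lambda>n. phi (Suc n) t i) \<longlonglongrightarrow> \<phi> t i"
      using l2 by (rule LIMSEQ_Suc)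
    then have "\<phi> t i = z0 i + J" using l1 LIMSEQ_unique by blast
    then show ?thesis using J by simp
  qed
  show ?thesis using cphil sol by blast
qed



lemma ae_bound_absint:
  fixes g :: "real \<Rightarrow> 'b::euclidean_space"
  assumes gm: "g \<in> borel_measurable (lebesgue_on {a..b})"
    and ae: "AE t in lebesgue_on {a..b}. norm (g t) \<le> B"
  shows "g absolutely_integrable_on {a..b}"
proof -
  have "(\<lambda>t. B) absolutely_integrable_on {a..b}"
    by (rule absolutely_integrable_continuous_real) (rule continuous_on_const)
  then have ci: "integrable (lebesgue_on {a..b}) (norm \<circ> (\<lambda>t. B))"
    using absolutely_integrable_measurable[of "{a..b}"] by auto
  have nm: "(norm \<circ> g) \<in> borel_measurable (lebesgue_on {a..b})"
    using gm by (simp add: o_def)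
  have "integrable (lebesgue_on {a..b}) (norm \<circ> g)"
  proof (rule Bochner_Integration.integrable_bound[OF ci nm])
    show "AE x in lebesgue_on {a..b}. norm ((norm \<circ> g) x) \<le> norm ((norm \<circ> (\<lambda>t. B)) x)"
      using ae by eventually_elim auto
  qed
  then show ?thesis using gm absolutely_integrable_measurable[of "{a..b}" g] by auto
qed

lemma has_integral_sub_interval:
  fixes h :: "real \<Rightarrow> 'b::banach"
  assumes "(h has_integral A) {a..t}" "(h has_integral B) {a..u}" "a \<le> u" "u \<le> t"
  shows "(h has_integral (A - B)) {u..t}"
proof -
  have hi2: "h integrable_on {a..t}" using assms(1) by blast
  have hi: "h integrable_on {u..t}"
    by (rule integrable_on_subinterval[OF hi2]) (use assms in auto)
  have "integral {a..u} h + integral {u..t} h = integral {a..t} h"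
    by (rule Henstock_Kurzweil_Integration.integral_combine[OF assms(3,4) hi2])
  then have "integral {u..t} h = A - B" using assms(1,2) integral_unique by (metis add_diff_cancel_left')
  then show ?thesis using hi integrable_integral by metis
qed

lemma consensus_nonpos:
  fixes U :: "nat \<Rightarrow> 'b::real_inner" and P :: "nat \<Rightarrow> nat \<Rightarrow> real"
  assumes sym: "\<And>i j. P i j = P j i" and nonneg: "\<And>i j. 0 \<le> P i j"
    and odd: "\<And>d. \<sigma> (- d) = - \<sigma> d" and pos: "\<And>d. 0 \<le> inner d (\<sigma> d)"
  shows "(\<Sum>i<N. \<Sum>j<N. P i j * inner (U i) (\<sigma> (U j - U i))) \<le> 0"
proof -
  define S where "S = (\<Sum>i<N. \<Sum>j<N. P i j * inner (U i) (\<sigma> (U j - U i)))"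
  have "S = (\<Sum>j<N. \<Sum>i<N. P i j * inner (U i) (\<sigma> (U j - U i)))"
    unfolding S_def by (rule sum.swap)
  also have "\<dots> = (\<Sum>i<N. \<Sum>j<N. - (P i j * inner (U j) (\<sigma> (U j - U i))))"
  proof (intro sum.cong refl)
    fix i j
    have "U i - U j = - (U j - U i)" by simp
    then have "\<sigma> (U i - U j) = - \<sigma> (U j - U i)" using odd by metis
    then show "P j i * inner (U j) (\<sigma> (U i - U j)) = - (P i j * inner (U j) (\<sigma> (U j - U i)))"
      using sym[of i j] by simp
  qed
  finally have S2: "S = (\<Sum>i<N. \<Sum>j<N. - (P i j * inner (U j) (\<sigma> (U j - U i))))" .
  have "S + S = (\<Sum>i<N. \<Sum>j<N. P i j * inner (U i) (\<sigma> (U j - U i)) - P i j * inner (U j) (\<sigma> (U j - U i)))"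
    by (subst (2) S2) (simp add: S_def sum.distrib[symmetric])
  also have "\<dots> = (\<Sum>i<N. \<Sum>j<N. - (P i j * inner (U j - U i) (\<sigma> (U j - U i))))"
    by (intro sum.cong refl) (simp add: inner_diff_left algebra_simps)
  also have "\<dots> \<le> 0"
    using nonneg pos by (intro sum_nonpos) (simp add: mult_nonneg_nonneg)
  finally show ?thesis unfolding S_def[symmetric] by simp
qed

lemma young_inner:
  fixes a b :: "'b::real_inner"
  assumes c: "c > 0"
  shows "2 * inner a b \<le> c * (norm a)\<^sup>2 + (norm b)\<^sup>2 / c"
proof -
  have "0 \<le> inner (c *\<^sub>R a - b) (c *\<^sub>R a - b)" by simp
  also have "inner (c *\<^sub>R a - b) (c *\<^sub>R a - b) = c\<^sup>2 * inner a a - 2 * c * inner a b + inner b b"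
    by (simp add: inner_diff_left inner_diff_right inner_commute power2_eq_square algebra_simps)
  also have "inner a a = (norm a)\<^sup>2" by (simp add: power2_norm_eq_inner)
  also have "inner b b = (norm b)\<^sup>2" by (simp add: power2_norm_eq_inner)
  finally have h: "2 * inner a b * c \<le> c\<^sup>2 * (norm a)\<^sup>2 + (norm b)\<^sup>2" by (simp add: algebra_simps)
  have "2 * inner a b \<le> (c\<^sup>2 * (norm a)\<^sup>2 + (norm b)\<^sup>2) / c"
    using h c by (simp add: pos_le_divide_eq)
  also have "\<dots> = c * (norm a)\<^sup>2 + (norm b)\<^sup>2 / c"
    using c by (simp add: field_simps power2_eq_square)
  finally show ?thesis .
qed

lemma cp_odd:
  fixes d :: "'b::euclidean_space"
  assumes R0: "R \<ge> 0"
  shows "closest_point (cball 0 R) (- d) = - closest_point (cball 0 R) d"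
proof (cases "R \<ge> 0")
  case True
  have ne: "cball (0::'b) R \<noteq> {}" using True by auto
  show ?thesis
  proof (rule closest_point_unique[symmetric])
    show "convex (cball (0::'b) R)" "closed (cball (0::'b) R)" by auto
    show "- closest_point (cball 0 R) d \<in> cball 0 R"
      using closest_point_in_set[OF _ ne, of d] by auto
    show "\<forall>z\<in>cball 0 R. dist (- d) (- closest_point (cball 0 R) d) \<le> dist (- d) z"
    proof
      fix z :: 'b assume "z \<in> cball 0 R"
      then have "- z \<in> cball 0 R" by auto
      then have "dist d (closest_point (cball 0 R) d) \<le> dist d (- z)"
        by (intro closest_point_le) auto
      then show "dist (- d) (- closest_point (cball 0 R) d) \<le> dist (- d) z"
        by (simp add: dist_norm norm_minus_commute) (metis minus_diff_eq minus_diff_commute norm_minus_cancel diff_minus_eq_add add.commute)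
    qed
  qed
next
  case False
  then show ?thesis using R0 by simp
qed

lemma cp_pos:
  fixes d :: "'b::euclidean_space"
  assumes R0: "R \<ge> 0"
  shows "0 \<le> inner d (closest_point (cball 0 R) d)"
proof (cases "R \<ge> 0")
  case True
  have "inner (d - closest_point (cball 0 R) d) (0 - closest_point (cball 0 R) d) \<le> 0"
    by (rule closest_point_dot) (use True in auto)
  moreover have "inner (d - closest_point (cball 0 R) d) (0 - closest_point (cball 0 R) d)
     = inner (closest_point (cball 0 R) d) (closest_point (cball 0 R) d) - inner d (closest_point (cball 0 R) d)"
    by (simp add: inner_diff_left inner_diff_right inner_commute)
  ultimately have "inner (closest_point (cball 0 R) d) (closest_point (cball 0 R) d) \<le> inner d (closest_point (cball 0 R) d)"
    by linarith
  moreover have "0 \<le> inner (closest_point (cball 0 R) d) (closest_point (cball 0 R) d)" by simp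
  ultimately show ?thesis by linarith
next
  case False
  then show ?thesis using R0 by simp
qed

lemma cp_bound:
  fixes d :: "'b::euclidean_space"
  assumes "R \<ge> 0"
  shows "norm (closest_point (cball 0 R) d) \<le> R"
proof -
  have "closest_point (cball 0 R) d \<in> cball 0 R"
    by (rule closest_point_in_set) (use assms in auto)
  then show ?thesis by simp
qed

lemma cp_lip:
  fixes d :: "'b::euclidean_space"
  assumes "R \<ge> 0"
  shows "norm (closest_point (cball 0 R) d - closest_point (cball 0 R) d') \<le> norm (d - d')"
  using closest_point_lipschitz[of "cball (0::'b) R" d d'] assms by (simp add: dist_norm)

lemma cp_id:
  fixes d :: "'b::euclidean_space"
  assumes "norm d \<le> R"
  shows "closest_point (cball 0 R) d = d"
  by (rule closest_point_self) (use assms in simp)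

lemma psi_cont:
  fixes \<Psi> :: "'a::euclidean_space \<Rightarrow> 'a \<Rightarrow> real"
  assumes L: "L-lipschitz_on UNIV (\<lambda>(y, z). \<Psi> y z)"
    and p: "continuous_on S p" and q: "continuous_on S q"
  shows "continuous_on S (\<lambda>s. \<Psi> (p s) (q s))"
proof -
  have c: "continuous_on UNIV (\<lambda>(y, z). \<Psi> y z)" by (rule lipschitz_on_continuous_on[OF L])
  have "continuous_on S ((\<lambda>(y, z). \<Psi> y z) \<circ> (\<lambda>s. (p s, q s)))"
    by (rule continuous_on_compose[OF continuous_on_Pair[OF p q]]) (rule continuous_on_subset[OF c], simp)
  then show ?thesis by (simp add: o_def)
qed

lemma psi_lip:
  fixes \<Psi> :: "'a::euclidean_space \<Rightarrow> 'a \<Rightarrow> real"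
  assumes L: "L-lipschitz_on UNIV (\<lambda>(y, z). \<Psi> y z)"
  shows "\<bar>\<Psi> a b - \<Psi> a' b'\<bar> \<le> L * (norm (a - a') + norm (b - b'))"
proof -
  have "dist ((\<lambda>(y, z). \<Psi> y z) (a, b)) ((\<lambda>(y, z). \<Psi> y z) (a', b')) \<le> L * dist (a, b) (a', b')"
    by (rule lipschitz_onD[OF L]) auto
  moreover have "dist (a, b) (a', b') \<le> norm (a - a') + norm (b - b')"
    using norm_Pair_le[of "a - a'" "b - b'"] by (simp add: dist_norm)
  moreover have "0 \<le> L" using lipschitz_on_nonneg[OF L] .
  ultimately show ?thesis
    by (simp add: dist_real_def) (meson mult_left_mono order_trans)
qed




lemma norm_fst_sub: "norm (fst p - fst q) \<le> norm (p - q)"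
proof -
  have "p - q = (fst p - fst q, snd p - snd q)" by (simp add: prod_eq_iff)
  then show ?thesis using norm_fst_le by metis
qed
lemma norm_snd_sub: "norm (snd p - snd q) \<le> norm (p - q)"
proof -
  have "p - q = (fst p - fst q, snd p - snd q)" by (simp add: prod_eq_iff)
  then show ?thesis using norm_snd_le by metis
qed

lemma G_lip:
  fixes \<Psi> :: "'a::euclidean_space \<Rightarrow> 'a \<Rightarrow> real" and \<sigma> :: "'a \<Rightarrow> 'a"
    and z z' :: "nat \<Rightarrow> 'a \<times> 'a"
  assumes N: "N \<ge> 1" and c0: "c \<ge> 0" and L0: "L \<ge> 0" and R0: "R \<ge> 0"
    and psil: "\<And>a b a' b'. \<bar>\<Psi> a b - \<Psi> a' b'\<bar> \<le> L * (norm (a - a') + norm (b - b'))"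
    and psib: "\<And>a b. \<bar>\<Psi> a b\<bar> \<le> C"
    and sb: "\<And>d. norm (\<sigma> d) \<le> R" and sl: "\<And>d d'. norm (\<sigma> d - \<sigma> d') \<le> norm (d - d')"
    and Gdef: "\<And>z i. G z i = (snd (z i), (1 / real N) *\<^sub>R (\<Sum>j<N. \<Psi> (fst (z i)) (fst (z j)) *\<^sub>R \<sigma> (snd (z j) - snd (z i)))
                    - c *\<^sub>R (snd (z i) - vbar))"
  shows "(\<Sum>i<N. norm (G z i - G z' i)) \<le> (1 + c + 2 * (L * R + C)) * (\<Sum>i<N. norm (z i - z' i))"
proof -
  define n where "n i = norm (z i - z' i)" for i
  define A where "A = L * R + C"
  have C0: "0 \<le> C" using psib[of undefined undefined] by simp
  have A0: "0 \<le> A" unfolding A_def using L0 R0 C0 by simp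
  have Tb: "norm (\<Psi> (fst (z i)) (fst (z j)) *\<^sub>R \<sigma> (snd (z j) - snd (z i))
              - \<Psi> (fst (z' i)) (fst (z' j)) *\<^sub>R \<sigma> (snd (z' j) - snd (z' i))) \<le> A * (n i + n j)" for i j
  proof -
    let ?p = "\<Psi> (fst (z i)) (fst (z j))" and ?p' = "\<Psi> (fst (z' i)) (fst (z' j))"
    let ?s = "\<sigma> (snd (z j) - snd (z i))" and ?s' = "\<sigma> (snd (z' j) - snd (z' i))"
    have eq: "?p *\<^sub>R ?s - ?p' *\<^sub>R ?s' = (?p - ?p') *\<^sub>R ?s + ?p' *\<^sub>R (?s - ?s')"
      by (simp add: algebra_simps)
    have "norm (?p *\<^sub>R ?s - ?p' *\<^sub>R ?s') \<le> norm ((?p - ?p') *\<^sub>R ?s) + norm (?p' *\<^sub>R (?s - ?s'))"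
      unfolding eq by (rule norm_triangle_ineq)
    also have "norm ((?p - ?p') *\<^sub>R ?s) = \<bar>?p - ?p'\<bar> * norm ?s" by simp
    also have "\<dots> \<le> (L * (n i + n j)) * R"
    proof (rule mult_mono)
      have "\<bar>?p - ?p'\<bar> \<le> L * (norm (fst (z i) - fst (z' i)) + norm (fst (z j) - fst (z' j)))" by (rule psil)
      also have "\<dots> \<le> L * (n i + n j)" unfolding n_def using L0
        by (intro mult_left_mono add_mono norm_fst_sub) auto
      finally show "\<bar>?p - ?p'\<bar> \<le> L * (n i + n j)" .
    qed (use sb L0 in \<open>auto simp: n_def\<close>)
    also have "norm (?p' *\<^sub>R (?s - ?s')) = \<bar>?p'\<bar> * norm (?s - ?s')" by simp
    also have "\<dots> \<le> C * (n i + n j)"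
    proof (rule mult_mono)
      have "norm (?s - ?s') \<le> norm ((snd (z j) - snd (z i)) - (snd (z' j) - snd (z' i)))" by (rule sl)
      also have "(snd (z j) - snd (z i)) - (snd (z' j) - snd (z' i)) = (snd (z j) - snd (z' j)) - (snd (z i) - snd (z' i))"
        by (simp add: algebra_simps)
      also have "norm \<dots> \<le> norm (snd (z j) - snd (z' j)) + norm (snd (z i) - snd (z' i))" by (rule norm_triangle_ineq4)
      also have "\<dots> \<le> n j + n i" unfolding n_def by (intro add_mono norm_snd_sub)
      finally show "norm (?s - ?s') \<le> n i + n j" by simp
    qed (use psib C0 in auto)
    finally show ?thesis unfolding A_def by (simp add: algebra_simps)
  qed
  have Gi: "norm (G z i - G z' i) \<le> (1 + c) * n i + (1 / real N) * (\<Sum>j<N. A * (n i + n j))" for i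
  proof -
    define S where "S = (\<Sum>j<N. \<Psi> (fst (z i)) (fst (z j)) *\<^sub>R \<sigma> (snd (z j) - snd (z i)))"
    define S' where "S' = (\<Sum>j<N. \<Psi> (fst (z' i)) (fst (z' j)) *\<^sub>R \<sigma> (snd (z' j) - snd (z' i)))"
    have "G z i - G z' i = (snd (z i) - snd (z' i), ((1 / real N) *\<^sub>R (S - S')) - c *\<^sub>R (snd (z i) - snd (z' i)))"
      unfolding Gdef S_def S'_def by (simp add: algebra_simps)
    then have "norm (G z i - G z' i) \<le> norm (snd (z i) - snd (z' i)) + norm (((1 / real N) *\<^sub>R (S - S')) - c *\<^sub>R (snd (z i) - snd (z' i)))"
      by (metis norm_Pair_le)
    also have "\<dots> \<le> n i + ((1 / real N) * norm (S - S') + c * n i)"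
    proof (rule add_mono)
      show "norm (snd (z i) - snd (z' i)) \<le> n i" unfolding n_def by (rule norm_snd_sub)
      have "norm (((1 / real N) *\<^sub>R (S - S')) - c *\<^sub>R (snd (z i) - snd (z' i)))
          \<le> norm ((1 / real N) *\<^sub>R (S - S')) + norm (c *\<^sub>R (snd (z i) - snd (z' i)))" by (rule norm_triangle_ineq4)
      also have "\<dots> \<le> (1 / real N) * norm (S - S') + c * n i"
        using c0 norm_snd_sub[of "z i" "z' i"] by (simp add: n_def mult_left_mono)
      finally show "norm (((1 / real N) *\<^sub>R (S - S')) - c *\<^sub>R (snd (z i) - snd (z' i))) \<le> (1 / real N) * norm (S - S') + c * n i" .
    qed
    also have "norm (S - S') \<le> (\<Sum>j<N. A * (n i + n j))"
    proof -
      have "S - S' = (\<Sum>j<N. \<Psi> (fst (z i)) (fst (z j)) *\<^sub>R \<sigma> (snd (z j) - snd (z i))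
              - \<Psi> (fst (z' i)) (fst (z' j)) *\<^sub>R \<sigma> (snd (z' j) - snd (z' i)))"
        unfolding S_def S'_def by (simp add: sum_subtractf)
      then have "norm (S - S') \<le> (\<Sum>j<N. norm (\<Psi> (fst (z i)) (fst (z j)) *\<^sub>R \<sigma> (snd (z j) - snd (z i))
              - \<Psi> (fst (z' i)) (fst (z' j)) *\<^sub>R \<sigma> (snd (z' j) - snd (z' i))))"
        by (simp add: norm_sum)
      also have "\<dots> \<le> (\<Sum>j<N. A * (n i + n j))" by (intro sum_mono Tb)
      finally show ?thesis .
    qed
    then have "n i + ((1 / real N) * norm (S - S') + c * n i) \<le> n i + ((1 / real N) * (\<Sum>j<N. A * (n i + n j)) + c * n i)"
      by (intro add_left_mono add_right_mono mult_left_mono) auto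
    finally show ?thesis by (simp add: algebra_simps)
  qed
  have Gi2: "norm (G z i - G z' i) \<le> (1 + c + A) * n i + (A / real N) * (\<Sum>j<N. n j)" for i
  proof -
    have "(\<Sum>j<N. A * (n i + n j)) = (\<Sum>j<N. A * n i) + (\<Sum>j<N. A * n j)"
      by (simp add: distrib_left sum.distrib)
    also have "\<dots> = A * real N * n i + A * (\<Sum>j<N. n j)"
      by (simp add: sum_distrib_left)
    finally have "(\<Sum>j<N. A * (n i + n j)) = A * real N * n i + A * (\<Sum>j<N. n j)" .
    then have "(1 / real N) * (\<Sum>j<N. A * (n i + n j)) = A * n i + (A / real N) * (\<Sum>j<N. n j)"
      using N by (simp add: field_simps)
    then show ?thesis using Gi[of i] by (simp add: algebra_simps)
  qed
  have "(\<Sum>i<N. norm (G z i - G z' i)) \<le> (\<Sum>i<N. (1 + c + A) * n i + (A / real N) * (\<Sum>j<N. n j))"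
    by (intro sum_mono Gi2)
  also have "\<dots> = (1 + c + A) * (\<Sum>i<N. n i) + real N * ((A / real N) * (\<Sum>j<N. n j))"
    by (simp add: sum.distrib sum_distrib_left)
  also have "\<dots> = (1 + c + 2 * A) * (\<Sum>i<N. n i)"
    using N by (simp add: field_simps)
  finally show ?thesis unfolding A_def n_def .
qed



theorem lemma4p2:
  fixes \<Psi> :: "'a::euclidean_space \<Rightarrow> 'a \<Rightarrow> real"
    and N :: nat and T lam C\<Psi> CB :: real and vbar :: 'a
    and x0 v0 :: "nat \<Rightarrow> 'a"
    and f :: "real \<Rightarrow> ('a \<times> 'a) \<Rightarrow> 'a" and x v :: "real \<Rightarrow> nat \<Rightarrow> 'a"
  assumes "N \<ge> 1" and "T > 0" and "lam > 0"
    and "\<exists>L. L-lipschitz_on UNIV (\<lambda>(y, z). \<Psi> y z)"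
    and "\<And>y z. \<Psi> y z = \<Psi> z y"
    and "\<And>y z. 0 \<le> \<Psi> y z" and "\<And>y z. \<Psi> y z \<le> C\<Psi>"
    and "CB \<ge> (1 + norm vbar) / sqrt lam"
    and "optimal \<Psi> N lam 0 T vbar CB x0 v0 f x v"
    and "0 \<le> t1" and "t1 \<le> t2" and "t2 \<le> T"
  shows "normN_sq N (\<lambda>i. v t2 i - vbar)
           \<le> (if lam \<le> 1 then 1 + 1 / sqrt lam else 1 + sqrt lam)
              * normN_sq N (\<lambda>i. v t1 i - vbar)"
proof -
  have N1: "N \<ge> 1" and lam0: "lam > 0" and t10: "0 \<le> t1" and t12: "t1 \<le> t2" and t2T: "t2 \<le> T"
    using assms by auto
  have t1T: "t1 \<le> T" using t12 t2T by linarith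
  have T0: "0 \<le> T" using assms(2) by simp
  have Npos: "real N > 0" using N1 by simp
  have psym: "\<And>y z. \<Psi> y z = \<Psi> z y" and pnn: "\<And>y z. 0 \<le> \<Psi> y z" and pb: "\<And>y z. \<Psi> y z \<le> C\<Psi>"
    using assms(5,6,7) by auto
  have C\<Psi>0: "0 \<le> C\<Psi>" using pnn[of undefined undefined] pb[of undefined undefined] by linarith
  obtain L where L: "L-lipschitz_on UNIV (\<lambda>(y, z). \<Psi> y z)" using assms(4) by blast
  have L0: "0 \<le> L" using lipschitz_on_nonneg[OF L] .
  have adm: "admissible CB 0 T f" and traj: "is_traj \<Psi> N 0 T f x0 v0 x v"
    and best: "\<And>g y w. admissible CB 0 T g \<Longrightarrow> is_traj \<Psi> N 0 T g x0 v0 y w \<Longrightarrow>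
                  cost N lam 0 T vbar f x v \<le> cost N lam 0 T vbar g y w"
    using assms(9) unfolding optimal_def by blast+
  define c where "c = 1 / sqrt lam"
  have c0: "c > 0" unfolding c_def using lam0 by simp
  have lamc2: "lam * c\<^sup>2 = 1" unfolding c_def using lam0 by (simp add: power_divide)
  have invc: "1 / c = c * lam" unfolding c_def using lam0
    by (simp add: field_simps)
  have CBc: "c * norm vbar + c \<le> CB" using assms(8) unfolding c_def by (simp add: add_divide_distrib)
  define cons where "cons s i = (1 / real N) *\<^sub>R (\<Sum>j<N. \<Psi> (x s i) (x s j) *\<^sub>R (v s j - v s i))" for s i
  define F where "F s i = f s (x s i, v s i)" for s i
  have rhs_eq: "cs_rhs \<Psi> N f x v i s = cons s i + F s i" for i s
    by (simp add: cs_rhs_def cons_def F_def)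
  have trx: "((\<lambda>s. v s i) has_integral (x t i - x0 i)) {0..t}" if "t \<in> {0..T}" "i < N" for t i
    using traj that unfolding is_traj_def by blast
  have trv: "((\<lambda>s. cs_rhs \<Psi> N f x v i s) has_integral (v t i - v0 i)) {0..t}" if "t \<in> {0..T}" "i < N" for t i
    using traj that unfolding is_traj_def by blast
  have xc: "continuous_on {0..T} (\<lambda>s. x s i)" if i: "i < N" for i
  proof -
    have "((\<lambda>s. v s i) has_integral (x T i - x0 i)) {0..T}" using trx[OF _ i, of T] T0 by simp
    then have vi: "(\<lambda>s. v s i) integrable_on {0..T}" by blast
    have "continuous_on {0..T} (\<lambda>t. x0 i + integral {0..t} (\<lambda>s. v s i))"
      by (intro continuous_intros indefinite_integral_continuous_1 vi)
    moreover have "x0 i + integral {0..t} (\<lambda>s. v s i) = x t i" if "t \<in> {0..T}" for t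
      using trx[OF that i] by (simp add: integral_unique)
    ultimately show ?thesis using continuous_on_cong by (metis (no_types, lifting))
  qed
  have rint: "(\<lambda>s. cs_rhs \<Psi> N f x v i s) integrable_on {0..T}" if i: "i < N" for i
  proof -
    have "((\<lambda>s. cs_rhs \<Psi> N f x v i s) has_integral (v T i - v0 i)) {0..T}" using trv[OF _ i, of T] T0 by simp
    then show ?thesis by blast
  qed
  have vc: "continuous_on {0..T} (\<lambda>s. v s i)" if i: "i < N" for i
  proof -
    have "continuous_on {0..T} (\<lambda>t. v0 i + integral {0..t} (\<lambda>s. cs_rhs \<Psi> N f x v i s))"
      by (intro continuous_intros indefinite_integral_continuous_1 rint i)
    moreover have "v0 i + integral {0..t} (\<lambda>s. cs_rhs \<Psi> N f x v i s) = v t i" if "t \<in> {0..T}" for t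
      using trv[OF that i] by (simp add: integral_unique)
    ultimately show ?thesis using continuous_on_cong by (metis (no_types, lifting))
  qed
  have consc: "continuous_on {0..T} (\<lambda>s. cons s i)" if i: "i < N" for i
  proof -
    have cj: "continuous_on {0..T} (\<lambda>s. \<Psi> (x s i) (x s j) *\<^sub>R (v s j - v s i))" if j: "j \<in> {..<N}" for j
      using j by (intro continuous_on_scaleR continuous_on_diff psi_cont[OF L] xc vc i) auto
    show ?thesis unfolding cons_def
      by (intro continuous_on_scaleR continuous_on_const continuous_on_sum cj)
  qed
  have Fint: "(\<lambda>s. F s i) integrable_on {0..T}" if i: "i < N" for i
  proof -
    have "(\<lambda>s. cs_rhs \<Psi> N f x v i s - cons s i) integrable_on {0..T}"
      by (intro integrable_diff rint i integrable_continuous_real consc)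
    then show ?thesis by (simp add: rhs_eq)
  qed
  have Fabs: "(\<lambda>s. F s i) absolutely_integrable_on {0..T}"
    and F2: "(\<lambda>s. (norm (F s i))\<^sup>2) integrable_on {0..T}" if i: "i < N" for i
  proof -
    have "compact ((\<lambda>s. (x s i, v s i)) ` {0..T})"
      by (intro compact_continuous_image continuous_on_Pair xc vc i compact_Icc)
    then have "bounded ((\<lambda>s. (x s i, v s i)) ` {0..T})" by (rule compact_imp_bounded)
    then obtain B where B0: "B > 0" and B': "\<forall>p\<in>(\<lambda>s. (x s i, v s i)) ` {0..T}. norm p \<le> B"
      unfolding bounded_pos by blast
    have B: "\<And>s. s \<in> {0..T} \<Longrightarrow> norm (x s i, v s i) \<le> B" using B' by blast
    have ae0: "AE t in lebesgue_on {0..T}. \<exists>L. L-lipschitz_on UNIV (f t) \<and> norm (f t 0) + L \<le> CB"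
      using adm unfolding admissible_def by blast
    have ae: "AE t in lebesgue_on {0..T}. norm (F t i) \<le> CB * (1 + B)"
      using ae0 AE_space
    proof eventually_elim
      case (elim t)
      then obtain L' where L': "L'-lipschitz_on UNIV (f t)" and LB: "norm (f t 0) + L' \<le> CB" by blast
      have tT: "t \<in> {0..T}" using elim by simp
      have L'0: "0 \<le> L'" using lipschitz_on_nonneg[OF L'] .
      have "dist (f t (x t i, v t i)) (f t 0) \<le> L' * dist (x t i, v t i) 0"
        by (rule lipschitz_onD[OF L']) auto
      moreover have "norm (f t (x t i, v t i)) \<le> norm (f t 0) + norm (f t (x t i, v t i) - f t 0)"
        by (rule norm_triangle_sub)
      ultimately have "norm (f t (x t i, v t i)) \<le> norm (f t 0) + L' * norm (x t i, v t i)"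
        by (simp add: dist_norm)
      also have "\<dots> \<le> norm (f t 0) + L' * B" using B[OF tT] L'0 by (intro add_left_mono mult_left_mono) auto
      also have "\<dots> \<le> (norm (f t 0) + L') * (1 + B)" using B0 L'0 by (simp add: algebra_simps)
      also have "\<dots> \<le> CB * (1 + B)" using LB B0 by (intro mult_right_mono) auto
      finally show ?case by (simp add: F_def)
    qed
    have Fm: "(\<lambda>s. F s i) \<in> borel_measurable (lebesgue_on {0..T})"
      by (rule integrable_imp_measurable[OF Fint[OF i]])
    show "(\<lambda>s. F s i) absolutely_integrable_on {0..T}"
      by (rule ae_bound_absint[OF Fm ae])
    have F2m: "(\<lambda>s. (norm (F s i))\<^sup>2) \<in> borel_measurable (lebesgue_on {0..T})"
      by (intro borel_measurable_power measurable_compose[OF Fm borel_measurable_norm])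
    have ae2: "AE t in lebesgue_on {0..T}. norm ((norm (F t i))\<^sup>2) \<le> (CB * (1 + B))\<^sup>2"
      using ae by eventually_elim (simp add: power_mono)
    have "(\<lambda>s. (norm (F s i))\<^sup>2) absolutely_integrable_on {0..T}"
      by (rule ae_bound_absint[OF F2m ae2])
    then show "(\<lambda>s. (norm (F s i))\<^sup>2) integrable_on {0..T}"
      using set_lebesgue_integral_eq_integral(1) by blast
  qed
  define cf where "cf s = normN_sq N (\<lambda>i. v s i - vbar) + lam * normN_sq N (\<lambda>i. f s (x s i, v s i))" for s
  have cf_alt: "cf s = (1 / real N) * (\<Sum>i<N. (norm (v s i - vbar))\<^sup>2) + lam * ((1 / real N) * (\<Sum>i<N. (norm (F s i))\<^sup>2))" for s
    by (simp add: cf_def normN_sq_def F_def)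
  have cfnn: "0 \<le> cf s" for s
    unfolding cf_alt using lam0 by (intro add_nonneg_nonneg mult_nonneg_nonneg sum_nonneg) auto
  have cfint: "cf integrable_on {0..T}"
  proof -
    have c1: "continuous_on {0..T} (\<lambda>s. (1 / real N) * (\<Sum>i<N. (norm (v s i - vbar))\<^sup>2))"
      by (intro continuous_on_mult continuous_on_const continuous_on_sum continuous_on_power continuous_on_norm
            continuous_on_diff vc) auto
    have i2: "(\<lambda>s. \<Sum>i<N. (norm (F s i))\<^sup>2) integrable_on {0..T}"
      by (intro integrable_sum F2) auto
    have "(\<lambda>s. (1 / real N) * (\<Sum>i<N. (norm (v s i - vbar))\<^sup>2) + (lam * (1 / real N)) * (\<Sum>i<N. (norm (F s i))\<^sup>2)) integrable_on {0..T}"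
      by (intro integrable_add integrable_continuous_real c1 integrable_on_mult_right i2)
    then show ?thesis unfolding cf_alt by (simp add: mult.assoc)
  qed
  have cfint_sub: "cf integrable_on {a..b}" if "0 \<le> a" "b \<le> T" for a b
    by (rule integrable_on_subinterval[OF cfint]) (use that in auto)
  have cost_f: "cost N lam 0 T vbar f x v = integral {0..T} cf"
    unfolding cost_def by (rule arg_cong[where f="integral {0..T}"]) (simp add: cf_def fun_eq_iff)
  define e where "e t = normN_sq N (\<lambda>i. v t i - vbar)" for t
  have e_alt: "e t = (1 / real N) * (\<Sum>i<N. (norm (v t i - vbar))\<^sup>2)" for t
    by (simp add: e_def normN_sq_def)
  have energyB: "e t2 - e t1 \<le> c * integral {t1..t2} cf"
  proof -
    have EI: "((\<lambda>s. 2 * inner (v s i - vbar) (cs_rhs \<Psi> N f x v i s)) has_integral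
               ((norm (v t2 i - vbar))\<^sup>2 - (norm (v t1 i - vbar))\<^sup>2)) {t1..t2}" if i: "i < N" for i
    proof (rule energy_identity[OF t12])
      have a1: "(\<lambda>s. cons s i) absolutely_integrable_on {t1..t2}"
        by (rule absolutely_integrable_continuous_real)
           (rule continuous_on_subset[OF consc[OF i]], use t10 t2T in auto)
      have a2: "(\<lambda>s. F s i) absolutely_integrable_on {t1..t2}"
        by (rule absolutely_integrable_on_subinterval[OF Fabs[OF i]]) (use t10 t2T in auto)
      show "(\<lambda>s. cs_rhs \<Psi> N f x v i s) absolutely_integrable_on {t1..t2}"
        unfolding rhs_eq by (rule set_integral_add(1)[OF a1 a2])
      fix t assume t: "t \<in> {t1..t2}"
      have "((\<lambda>s. cs_rhs \<Psi> N f x v i s) has_integral ((v t i - v0 i) - (v t1 i - v0 i))) {t1..t}"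
        by (rule has_integral_sub_interval[OF trv[OF _ i] trv[OF _ i]]) (use t t10 t2T in auto)
      then show "((\<lambda>s. cs_rhs \<Psi> N f x v i s) has_integral (v t i - vbar - (v t1 i - vbar))) {t1..t}"
        by simp
    qed
    have EIs: "((\<lambda>s. (1 / real N) * (\<Sum>i<N. 2 * inner (v s i - vbar) (cs_rhs \<Psi> N f x v i s))) has_integral
               (e t2 - e t1)) {t1..t2}"
    proof -
      have "((\<lambda>s. \<Sum>i<N. 2 * inner (v s i - vbar) (cs_rhs \<Psi> N f x v i s)) has_integral
               (\<Sum>i<N. (norm (v t2 i - vbar))\<^sup>2 - (norm (v t1 i - vbar))\<^sup>2)) {t1..t2}"
        by (intro has_integral_sum EI) auto
      from has_integral_mult_right[OF this, of "1 / real N"]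
      show ?thesis unfolding e_alt by (simp add: sum_subtractf right_diff_distrib)
    qed
    have cfI: "(cf has_integral integral {t1..t2} cf) {t1..t2}"
      using cfint_sub[OF t10 t2T] by blast
    have pw: "(1 / real N) * (\<Sum>i<N. 2 * inner (v s i - vbar) (cs_rhs \<Psi> N f x v i s)) \<le> c * cf s" for s
    proof -
      define U where "U i = v s i - vbar" for i
      have consum: "(\<Sum>i<N. inner (U i) (cons s i)) \<le> 0"
      proof -
        have "(\<Sum>i<N. inner (U i) (cons s i)) = (1 / real N) * (\<Sum>i<N. \<Sum>j<N. \<Psi> (x s i) (x s j) * inner (U i) (id (U j - U i)))"
          unfolding cons_def U_def by (simp add: inner_sum_right sum_distrib_left algebra_simps)
        also have "\<dots> \<le> 0"
          using consensus_nonpos[of "\<lambda>i j. \<Psi> (x s i) (x s j)" id U N] psym pnn Npos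
          by (intro mult_nonneg_nonpos) auto
        finally show ?thesis .
      qed
      have fsum: "(\<Sum>i<N. 2 * inner (U i) (F s i)) \<le> (\<Sum>i<N. c * (norm (U i))\<^sup>2 + (norm (F s i))\<^sup>2 / c)"
        by (intro sum_mono young_inner c0)
      have "(\<Sum>i<N. 2 * inner (v s i - vbar) (cs_rhs \<Psi> N f x v i s))
            = 2 * (\<Sum>i<N. inner (U i) (cons s i)) + (\<Sum>i<N. 2 * inner (U i) (F s i))"
        unfolding rhs_eq U_def by (simp add: inner_add_right sum.distrib sum_distrib_left)
      also have "\<dots> \<le> (\<Sum>i<N. c * (norm (U i))\<^sup>2 + (norm (F s i))\<^sup>2 / c)"
        using consum fsum by linarith
      also have "\<dots> = c * (\<Sum>i<N. (norm (U i))\<^sup>2) + (c * lam) * (\<Sum>i<N. (norm (F s i))\<^sup>2)"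
      proof -
        have dv: "y / c = (c * lam) * y" for y :: real
          using invc by (metis divide_inverse_commute inverse_eq_divide)
        show ?thesis unfolding dv by (simp add: sum.distrib sum_distrib_left)
      qed
      finally have "(\<Sum>i<N. 2 * inner (v s i - vbar) (cs_rhs \<Psi> N f x v i s))
          \<le> c * (\<Sum>i<N. (norm (U i))\<^sup>2) + (c * lam) * (\<Sum>i<N. (norm (F s i))\<^sup>2)" .
      then have "(1 / real N) * (\<Sum>i<N. 2 * inner (v s i - vbar) (cs_rhs \<Psi> N f x v i s))
          \<le> (1 / real N) * (c * (\<Sum>i<N. (norm (U i))\<^sup>2) + (c * lam) * (\<Sum>i<N. (norm (F s i))\<^sup>2))"
        using Npos by (intro mult_left_mono) auto
      also have "\<dots> = c * cf s" unfolding cf_alt U_def by (simp add: algebra_simps)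
      finally show ?thesis .
    qed
    have "e t2 - e t1 \<le> integral {t1..t2} (\<lambda>s. c * cf s)"
      by (rule has_integral_le[OF EIs has_integral_mult_right[OF cfI, of c, folded integral_mult_right]])
         (use pw in auto)
    then show ?thesis by simp
  qed
  have cf_split: "integral {t1..t2} cf \<le> integral {t1..T} cf"
  proof -
    have "integral {t1..t2} cf + integral {t2..T} cf = integral {t1..T} cf"
      by (rule Henstock_Kurzweil_Integration.integral_combine[OF t12 t2T cfint_sub[OF t10 order_refl]])
    moreover have "0 \<le> integral {t2..T} cf"
      by (rule integral_nonneg[OF cfint_sub]) (use t10 t12 cfnn in auto)
    ultimately show ?thesis by linarith
  qed
  define E1 where "E1 = (\<Sum>i<N. (norm (v t1 i - vbar))\<^sup>2)"
  have E10: "0 \<le> E1" unfolding E1_def by (intro sum_nonneg) auto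
  define R where "R = 2 * sqrt E1"
  have R0: "0 \<le> R" unfolding R_def using E10 by simp
  define \<sigma> where "\<sigma> d = closest_point (cball 0 R) d" for d :: 'a
  define G where "G z i = (snd (z i), (1 / real N) *\<^sub>R (\<Sum>j<N. \<Psi> (fst (z i)) (fst (z j)) *\<^sub>R \<sigma> (snd (z j) - snd (z i)))
                    - c *\<^sub>R (snd (z i) - vbar))" for z :: "nat \<Rightarrow> 'a \<times> 'a" and i
  define K where "K = 1 + c + 2 * (L * R + C\<Psi>)"
  have K0: "0 \<le> K" unfolding K_def using c0 L0 R0 C\<Psi>0 by simp
  have Glip: "(\<Sum>i<N. norm (G z i - G z' i)) \<le> K * (\<Sum>i<N. norm (z i - z' i))" for z z'
    unfolding K_def
  proof (rule G_lip[OF N1 less_imp_le[OF c0] L0 R0])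
    show "\<bar>\<Psi> a b - \<Psi> a' b'\<bar> \<le> L * (norm (a - a') + norm (b - b'))" for a b a' b'
      by (rule psi_lip[OF L])
    show "\<bar>\<Psi> a b\<bar> \<le> C\<Psi>" for a b using pnn[of a b] pb[of a b] by simp
    show "norm (\<sigma> d) \<le> R" for d unfolding \<sigma>_def by (rule cp_bound[OF R0])
    show "norm (\<sigma> d - \<sigma> d') \<le> norm (d - d')" for d d' unfolding \<sigma>_def by (rule cp_lip[OF R0])
    show "G z i = (snd (z i), (1 / real N) *\<^sub>R (\<Sum>j<N. \<Psi> (fst (z i)) (fst (z j)) *\<^sub>R \<sigma> (snd (z j) - snd (z i)))
                    - c *\<^sub>R (snd (z i) - vbar))" for z i by (simp add: G_def)
  qed
  define z0 where "z0 i = (x t1 i, v t1 i)" for i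
  obtain \<phi> where \<phi>c': "\<forall>i<N. continuous_on {t1..T} (\<lambda>t. \<phi> t i)"
    and \<phi>int': "\<forall>t\<in>{t1..T}. \<forall>i<N. ((\<lambda>s. G (\<phi> s) i) has_integral (\<phi> t i - z0 i)) {t1..t}"
    using picard[OF t1T K0 Glip, of z0] by (elim exE conjE)
  have \<phi>c: "\<And>i. i < N \<Longrightarrow> continuous_on {t1..T} (\<lambda>t. \<phi> t i)" using \<phi>c' by simp
  have \<phi>int: "\<And>t i. t \<in> {t1..T} \<Longrightarrow> i < N \<Longrightarrow> ((\<lambda>s. G (\<phi> s) i) has_integral (\<phi> t i - z0 i)) {t1..t}"
    using \<phi>int' by simp
  define Y where "Y t i = fst (\<phi> t i)" for t i
  define W where "W t i = snd (\<phi> t i)" for t i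
  have Wc: "continuous_on {t1..T} (\<lambda>t. W t i)" if i: "i < N" for i
    unfolding W_def by (intro continuous_on_snd \<phi>c i)
  have Gc: "continuous_on {t1..T} (\<lambda>s. G (\<phi> s) i)" if i: "i < N" for i
    by (rule cont_G[OF Glip \<phi>c i])
  have \<phi>t1: "\<phi> t1 i = z0 i" if i: "i < N" for i
  proof -
    have "((\<lambda>s. G (\<phi> s) i) has_integral (\<phi> t1 i - z0 i)) {t1..t1}" using \<phi>int[OF _ i, of t1] t1T by simp
    moreover have "((\<lambda>s. G (\<phi> s) i) has_integral 0) {t1..t1}" using has_integral_refl(1)[of _ t1] by simp
    ultimately have "\<phi> t1 i - z0 i = 0" by (rule has_integral_unique)
    then show ?thesis by simp
  qed
  have Yt1: "Y t1 i = x t1 i" and Wt1: "W t1 i = v t1 i" if "i < N" for i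
    using \<phi>t1[OF that] by (simp_all add: Y_def W_def z0_def)
  define hW where "hW s i = (1 / real N) *\<^sub>R (\<Sum>j<N. \<Psi> (Y s i) (Y s j) *\<^sub>R \<sigma> (W s j - W s i)) - c *\<^sub>R (W s i - vbar)" for s i
  have Yint: "((\<lambda>s. W s i) has_integral (Y t i - x t1 i)) {t1..t}" if t: "t \<in> {t1..T}" and i: "i < N" for t i
    using has_integral_linear[OF \<phi>int[OF t i] bounded_linear_fst]
    by (simp add: o_def G_def W_def Y_def z0_def)
  have Wint: "((\<lambda>s. hW s i) has_integral (W t i - v t1 i)) {t1..t}" if t: "t \<in> {t1..T}" and i: "i < N" for t i
    using has_integral_linear[OF \<phi>int[OF t i] bounded_linear_snd]
    by (simp add: o_def G_def W_def Y_def z0_def hW_def)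
  have hWc: "continuous_on {t1..T} (\<lambda>s. hW s i)" if i: "i < N" for i
  proof -
    have "continuous_on {t1..T} (\<lambda>s. snd (G (\<phi> s) i))" by (intro continuous_on_snd Gc i)
    then show ?thesis by (simp add: G_def hW_def W_def Y_def)
  qed
  define EW where "EW s = (\<Sum>i<N. (norm (W s i - vbar))\<^sup>2)" for s
  have EWc: "continuous_on {t1..T} EW"
    unfolding EW_def[abs_def] by (intro continuous_on_sum continuous_on_power continuous_on_norm continuous_on_diff
        continuous_on_const Wc) auto
  have EWnn: "0 \<le> EW s" for s unfolding EW_def by (intro sum_nonneg) auto
  have EWt1: "EW t1 = E1" unfolding EW_def E1_def using Wt1 by simp
  have EWint: "EW integrable_on {t1..t}" if "t \<in> {t1..T}" for t
    by (rule integrable_continuous_real, rule continuous_on_subset[OF EWc]) (use that in auto)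
  have decay: "EW t + 2 * c * integral {t1..t} EW \<le> E1" if t: "t \<in> {t1..T}" for t
  proof -
    have tt: "t1 \<le> t" using t by simp
    have EI: "((\<lambda>s. 2 * inner (W s i - vbar) (hW s i)) has_integral
               ((norm (W t i - vbar))\<^sup>2 - (norm (W t1 i - vbar))\<^sup>2)) {t1..t}" if i: "i < N" for i
    proof (rule energy_identity[OF tt])
      show "(\<lambda>s. hW s i) absolutely_integrable_on {t1..t}"
        by (rule absolutely_integrable_continuous_real, rule continuous_on_subset[OF hWc[OF i]]) (use t in auto)
      fix t' assume t': "t' \<in> {t1..t}"
      have "((\<lambda>s. hW s i) has_integral (W t' i - v t1 i)) {t1..t'}"
        by (rule Wint[OF _ i]) (use t t' in auto)
      then show "((\<lambda>s. hW s i) has_integral (W t' i - vbar - (W t1 i - vbar))) {t1..t'}"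
        using Wt1[OF i] by simp
    qed
    have EIs: "((\<lambda>s. \<Sum>i<N. 2 * inner (W s i - vbar) (hW s i)) has_integral (EW t - EW t1)) {t1..t}"
    proof -
      have "((\<lambda>s. \<Sum>i<N. 2 * inner (W s i - vbar) (hW s i)) has_integral
               (\<Sum>i<N. (norm (W t i - vbar))\<^sup>2 - (norm (W t1 i - vbar))\<^sup>2)) {t1..t}"
        by (intro has_integral_sum EI) auto
      then show ?thesis unfolding EW_def by (simp add: sum_subtractf)
    qed
    have pw: "(\<Sum>i<N. 2 * inner (W s i - vbar) (hW s i)) \<le> -2 * c * EW s" for s
    proof -
      define U where "U i = W s i - vbar" for i
      have "(\<Sum>i<N. inner (U i) ((1 / real N) *\<^sub>R (\<Sum>j<N. \<Psi> (Y s i) (Y s j) *\<^sub>R \<sigma> (W s j - W s i))))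
          = (1 / real N) * (\<Sum>i<N. \<Sum>j<N. \<Psi> (Y s i) (Y s j) * inner (U i) (\<sigma> (U j - U i)))"
        unfolding U_def by (simp add: inner_sum_right sum_distrib_left algebra_simps)
      also have "\<dots> \<le> 0"
      proof -
        have "(\<Sum>i<N. \<Sum>j<N. \<Psi> (Y s i) (Y s j) * inner (U i) (\<sigma> (U j - U i))) \<le> 0"
          by (rule consensus_nonpos) (use psym pnn in \<open>auto simp: \<sigma>_def cp_odd[OF R0] cp_pos[OF R0]\<close>)
        then show ?thesis using Npos by (intro mult_nonneg_nonpos) auto
      qed
      finally have cs: "(\<Sum>i<N. inner (U i) ((1 / real N) *\<^sub>R (\<Sum>j<N. \<Psi> (Y s i) (Y s j) *\<^sub>R \<sigma> (W s j - W s i)))) \<le> 0" .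
      have trm: "2 * inner (W s i - vbar) (hW s i)
          = 2 * inner (U i) ((1 / real N) *\<^sub>R (\<Sum>j<N. \<Psi> (Y s i) (Y s j) *\<^sub>R \<sigma> (W s j - W s i)))
            - 2 * c * inner (U i) (U i)" for i
        unfolding hW_def U_def by (simp add: inner_diff_right)
      have "(\<Sum>i<N. 2 * inner (W s i - vbar) (hW s i))
          = 2 * (\<Sum>i<N. inner (U i) ((1 / real N) *\<^sub>R (\<Sum>j<N. \<Psi> (Y s i) (Y s j) *\<^sub>R \<sigma> (W s j - W s i))))
            - 2 * c * (\<Sum>i<N. inner (U i) (U i))"
        unfolding trm by (simp add: sum_subtractf sum_distrib_left)
      also have "(\<Sum>i<N. inner (U i) (U i)) = EW s"
        unfolding EW_def U_def by (simp add: power2_norm_eq_inner)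
      finally show ?thesis using cs by linarith
    qed
    have I2: "((\<lambda>s. (-2 * c) * EW s) has_integral (-2 * c) * integral {t1..t} EW) {t1..t}"
      by (rule has_integral_mult_right[OF integrable_integral[OF EWint[OF t]]])
    have "EW t - EW t1 \<le> (-2 * c) * integral {t1..t} EW"
      by (rule has_integral_le[OF EIs I2]) (rule pw)
    then show ?thesis using EWt1 by simp
  qed
  have EWle: "EW s \<le> E1" if s: "s \<in> {t1..T}" for s
  proof -
    have "0 \<le> integral {t1..s} EW" by (rule integral_nonneg[OF EWint[OF s]]) (use EWnn in auto)
    moreover have "0 \<le> 2 * c" using c0 by simp
    ultimately have "0 \<le> 2 * c * integral {t1..s} EW" by simp
    then show ?thesis using decay[OF s] by linarith
  qed
  have Wdiff: "norm (W s j - W s i) \<le> R" if s: "s \<in> {t1..T}" and i: "i < N" and j: "j < N" for s i j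
  proof -
    have nU: "norm (W s k - vbar) \<le> sqrt E1" if k: "k < N" for k
    proof -
      have "(norm (W s k - vbar))\<^sup>2 \<le> EW s" unfolding EW_def
        using k by (intro member_le_sum) auto
      also have "\<dots> \<le> E1" by (rule EWle[OF s])
      finally show ?thesis by (simp add: real_le_rsqrt)
    qed
    have "W s j - W s i = (W s j - vbar) - (W s i - vbar)" by simp
    then have "norm (W s j - W s i) \<le> norm (W s j - vbar) + norm (W s i - vbar)"
      by (metis norm_triangle_ineq4)
    also have "\<dots> \<le> R" unfolding R_def using nU[OF i] nU[OF j] by simp
    finally show ?thesis .
  qed
  have hW_eq: "hW s i = (1 / real N) *\<^sub>R (\<Sum>j<N. \<Psi> (Y s i) (Y s j) *\<^sub>R (W s j - W s i)) - c *\<^sub>R (W s i - vbar)"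
    if s: "s \<in> {t1..T}" and i: "i < N" for s i
  proof -
    have eqs: "\<sigma> (W s j - W s i) = W s j - W s i" if j: "j \<in> {..<N}" for j
      unfolding \<sigma>_def by (rule cp_id) (use Wdiff[OF s i] j in auto)
    have sc: "(\<Sum>j<N. \<Psi> (Y s i) (Y s j) *\<^sub>R \<sigma> (W s j - W s i)) = (\<Sum>j<N. \<Psi> (Y s i) (Y s j) *\<^sub>R (W s j - W s i))"
      by (rule sum.cong[OF refl]) (simp add: eqs)
    show ?thesis unfolding hW_def sc ..
  qed
  have costW: "2 * c * integral {t1..T} EW \<le> E1"
    using decay[of T] EWnn[of T] t1T by simp
  define y where "y t i = (if t \<le> t1 then x t i else Y t i)" for t i
  define w where "w t i = (if t \<le> t1 then v t i else W t i)" for t i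
  define g where "g t z = (if t < t1 then f t z else - c *\<^sub>R (snd z - vbar))" for t and z :: "'a \<times> 'a"
  have w_on: "w s i = W s i" if "s \<in> {t1..T}" "i < N" for s i
    using that Wt1 by (auto simp: w_def)
  have y_on: "y s i = Y s i" if "s \<in> {t1..T}" "i < N" for s i
    using that Yt1 by (auto simp: y_def)
  have adm_g: "admissible CB 0 T g"
    unfolding admissible_def
  proof (intro conjI allI)
    fix z :: "'a \<times> 'a"
    have fm: "(\<lambda>t. f t z) \<in> borel_measurable (lebesgue_on {0..T})"
      using adm unfolding admissible_def by blast
    have "(\<lambda>t. if t \<in> {..<t1} then f t z else - c *\<^sub>R (snd z - vbar)) \<in> borel_measurable (lebesgue_on {0..T})"
    proof (rule measurable_If_set[OF fm measurable_const])
      show "{..<t1} \<inter> space (lebesgue_on {0..T}) \<in> sets (lebesgue_on {0..T})"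
        by (simp add: sets_restrict_space_iff)
    qed simp
    then show "(\<lambda>t. g t z) \<in> borel_measurable (lebesgue_on {0..T})"
      by (simp add: g_def)
  next
    have ae0: "AE t in lebesgue_on {0..T}. \<exists>L. L-lipschitz_on UNIV (f t) \<and> norm (f t 0) + L \<le> CB"
      using adm unfolding admissible_def by blast
    show "AE t in lebesgue_on {0..T}. \<exists>L. L-lipschitz_on UNIV (g t) \<and> norm (g t 0) + L \<le> CB"
      using ae0
    proof eventually_elim
      case (elim t)
      show ?case
      proof (cases "t < t1")
        case True
        then show ?thesis using elim by (simp add: g_def)
      next
        case False
        have lip: "c-lipschitz_on UNIV (g t)"
        proof (rule lipschitz_onI)
          fix p q :: "'a \<times> 'a"
          have "g t p - g t q = - c *\<^sub>R (snd p - snd q)"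
            using False by (simp add: g_def algebra_simps)
          then have "dist (g t p) (g t q) = c * norm (snd p - snd q)"
            using c0 by (simp add: dist_norm)
          also have "\<dots> \<le> c * dist p q" using c0 norm_snd_sub[of p q] by (simp add: dist_norm)
          finally show "dist (g t p) (g t q) \<le> c * dist p q" .
        qed (use c0 in simp)
        have "norm (g t 0) = c * norm vbar" using False c0 by (simp add: g_def)
        then show ?thesis using lip CBc by (intro exI[of _ c]) (simp add: add.commute)
      qed
    qed
  qed
  have traj_g: "is_traj \<Psi> N 0 T g x0 v0 y w"
    unfolding is_traj_def
  proof (intro ballI allI impI conjI)
    fix t i assume t: "t \<in> {0..T}" and i: "i < N"
    have rhs_low: "cs_rhs \<Psi> N g y w i s = cs_rhs \<Psi> N f x v i s" if s: "s < t1" for s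
    proof -
      have "y s = x s" "w s = v s" "g s = f s" using s by (auto simp: y_def w_def g_def fun_eq_iff)
      then show ?thesis by (simp add: cs_rhs_def)
    qed
    have rhs_high: "cs_rhs \<Psi> N g y w i s = hW s i" if s: "s \<in> {t1..T}" for s
    proof -
      have sc: "(\<Sum>j<N. \<Psi> (y s i) (y s j) *\<^sub>R (w s j - w s i)) = (\<Sum>j<N. \<Psi> (Y s i) (Y s j) *\<^sub>R (W s j - W s i))"
        by (rule sum.cong[OF refl]) (simp add: y_on[OF s] w_on[OF s] i)
      have gs: "g s (y s i, w s i) = - c *\<^sub>R (W s i - vbar)"
        using s i by (simp add: g_def w_on)
      have "cs_rhs \<Psi> N g y w i s = (1 / real N) *\<^sub>R (\<Sum>j<N. \<Psi> (Y s i) (Y s j) *\<^sub>R (W s j - W s i)) + - c *\<^sub>R (W s i - vbar)"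
        unfolding cs_rhs_def sc gs ..
      also have "\<dots> = hW s i" using hW_eq[OF s i] by simp
      finally show ?thesis .
    qed
    show "((\<lambda>s. w s i) has_integral (y t i - x0 i)) {0..t}"
    proof (cases "t \<le> t1")
      case True
      have "((\<lambda>s. w s i) has_integral (x t i - x0 i)) {0..t}"
        by (rule has_integral_eq[OF _ trx[OF t i]]) (use True in \<open>simp add: w_def\<close>)
      then show ?thesis using True by (simp add: y_def)
    next
      case False
      have a1: "((\<lambda>s. w s i) has_integral (x t1 i - x0 i)) {0..t1}"
        by (rule has_integral_eq[OF _ trx[OF _ i]]) (use t10 t1T in \<open>simp_all add: w_def\<close>)
      have a2: "((\<lambda>s. w s i) has_integral (Y t i - x t1 i)) {t1..t}"
        by (rule has_integral_eq[OF _ Yint[OF _ i]]) (use False t i in \<open>simp_all add: w_on\<close>)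
      have "((\<lambda>s. w s i) has_integral (x t1 i - x0 i + (Y t i - x t1 i))) {0..t}"
        by (rule has_integral_combine[OF t10 _ a1 a2]) (use False in simp)
      then show ?thesis using False by (simp add: y_def)
    qed
    show "((\<lambda>s. cs_rhs \<Psi> N g y w i s) has_integral (w t i - v0 i)) {0..t}"
    proof (cases "t \<le> t1")
      case True
      have "((\<lambda>s. cs_rhs \<Psi> N g y w i s) has_integral (v t i - v0 i)) {0..t}"
      proof (rule has_integral_spike_finite[OF _ _ trv[OF t i]])
        show "finite {t1}" by simp
        fix s assume "s \<in> {0..t} - {t1}"
        then have "s < t1" using True by auto
        then show "cs_rhs \<Psi> N g y w i s = cs_rhs \<Psi> N f x v i s" by (rule rhs_low)
      qed
      then show ?thesis using True by (simp add: w_def)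
    next
      case False
      have a1: "((\<lambda>s. cs_rhs \<Psi> N g y w i s) has_integral (v t1 i - v0 i)) {0..t1}"
      proof (rule has_integral_spike_finite[OF _ _ trv[OF _ i]])
        show "finite {t1}" by simp
        show "t1 \<in> {0..T}" using t10 t1T by simp
        fix s assume "s \<in> {0..t1} - {t1}"
        then have "s < t1" by auto
        then show "cs_rhs \<Psi> N g y w i s = cs_rhs \<Psi> N f x v i s" by (rule rhs_low)
      qed
      have a2: "((\<lambda>s. cs_rhs \<Psi> N g y w i s) has_integral (W t i - v t1 i)) {t1..t}"
      proof (rule has_integral_eq[OF _ Wint[OF _ i]])
        show "t \<in> {t1..T}" using False t by simp
        fix s assume "s \<in> {t1..t}"
        then have "s \<in> {t1..T}" using t by simp
        then show "hW s i = cs_rhs \<Psi> N g y w i s" by (simp add: rhs_high)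
      qed
      have "((\<lambda>s. cs_rhs \<Psi> N g y w i s) has_integral (v t1 i - v0 i + (W t i - v t1 i))) {0..t}"
        by (rule has_integral_combine[OF t10 _ a1 a2]) (use False in simp)
      then show ?thesis using False by (simp add: w_def)
    qed
  qed
  define cg where "cg s = normN_sq N (\<lambda>i. w s i - vbar) + lam * normN_sq N (\<lambda>i. g s (y s i, w s i))" for s
  have cost_g: "cost N lam 0 T vbar g y w = integral {0..T} cg"
    unfolding cost_def by (rule arg_cong[where f="integral {0..T}"]) (simp add: cg_def fun_eq_iff)
  have cg_low: "cg s = cf s" if s: "s < t1" for s
  proof -
    have "y s = x s" "w s = v s" "g s = f s" using s by (auto simp: y_def w_def g_def fun_eq_iff)
    then show ?thesis by (simp add: cg_def cf_def)
  qed
  have cg_high: "cg s = (2 / real N) * EW s" if s: "s \<in> {t1..T}" for s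
  proof -
    have "(\<Sum>i<N. (norm (w s i - vbar))\<^sup>2) = EW s"
      unfolding EW_def by (rule sum.cong[OF refl]) (simp add: w_on[OF s])
    then have "normN_sq N (\<lambda>i. w s i - vbar) = (1 / real N) * EW s"
      unfolding normN_sq_def by simp
    moreover have "normN_sq N (\<lambda>i. g s (y s i, w s i)) = (1 / real N) * (c\<^sup>2 * EW s)"
    proof -
      have "g s (y s i, w s i) = - c *\<^sub>R (W s i - vbar)" if "i < N" for i
        using s that by (simp add: g_def w_on)
      then have "(\<Sum>i<N. (norm (g s (y s i, w s i)))\<^sup>2) = (\<Sum>i<N. c\<^sup>2 * (norm (W s i - vbar))\<^sup>2)"
        using c0 by (intro sum.cong refl) (simp add: power_mult_distrib)
      then show ?thesis unfolding normN_sq_def EW_def by (simp add: sum_distrib_left)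
    qed
    ultimately have "cg s = (1 / real N) * EW s + lam * ((1 / real N) * (c\<^sup>2 * EW s))"
      by (simp add: cg_def)
    also have "\<dots> = (1 / real N) * EW s + (lam * c\<^sup>2) * ((1 / real N) * EW s)" by (simp add: algebra_simps)
    also have "\<dots> = (2 / real N) * EW s" unfolding lamc2 by simp
    finally show ?thesis .
  qed
  have cfI1: "(cf has_integral integral {0..t1} cf) {0..t1}"
    using cfint_sub[OF order_refl t1T] by blast
  have cgI1: "(cg has_integral integral {0..t1} cf) {0..t1}"
  proof (rule has_integral_spike_finite[OF _ _ cfI1])
    show "finite {t1}" by simp
    fix s assume "s \<in> {0..t1} - {t1}"
    then have "s < t1" by auto
    then show "cg s = cf s" by (rule cg_low)
  qed
  have EWI: "(EW has_integral integral {t1..T} EW) {t1..T}"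
    using EWint[of T] t1T by auto
  have cgI2: "(cg has_integral (2 / real N) * integral {t1..T} EW) {t1..T}"
  proof -
    have "((\<lambda>s. (2 / real N) * EW s) has_integral (2 / real N) * integral {t1..T} EW) {t1..T}"
      by (rule has_integral_mult_right[OF EWI])
    then show ?thesis by (rule has_integral_eq[rotated]) (simp add: cg_high)
  qed
  have cgI: "(cg has_integral integral {0..t1} cf + (2 / real N) * integral {t1..T} EW) {0..T}"
    by (rule has_integral_combine[OF t10 t1T cgI1 cgI2])
  have costf_split: "integral {0..T} cf = integral {0..t1} cf + integral {t1..T} cf"
    using Henstock_Kurzweil_Integration.integral_combine[OF t10 t1T cfint] by simp
  have "integral {0..T} cf \<le> integral {0..T} cg"
    using best[OF adm_g traj_g] cost_f cost_g by simp
  then have tail: "integral {t1..T} cf \<le> (2 / real N) * integral {t1..T} EW"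
    using costf_split integral_unique[OF cgI] by simp
  have e1: "e t1 = (1 / real N) * E1" unfolding e_alt E1_def by simp
  have "c * integral {t1..T} cf \<le> c * ((2 / real N) * integral {t1..T} EW)"
    using tail c0 by (intro mult_left_mono) auto
  also have "\<dots> = (1 / real N) * (2 * c * integral {t1..T} EW)" by (simp add: algebra_simps)
  also have "\<dots> \<le> (1 / real N) * E1" using costW Npos by (intro mult_left_mono) auto
  finally have tailc: "c * integral {t1..T} cf \<le> e t1" using e1 by simp
  have "e t2 \<le> 2 * e t1"
  proof -
    have "c * integral {t1..t2} cf \<le> c * integral {t1..T} cf"
      using cf_split c0 by (intro mult_left_mono) auto
    then show ?thesis using energyB tailc by linarith
  qed
  moreover have "0 \<le> e t1" unfolding e_alt using Npos by (intro mult_nonneg_nonneg sum_nonneg) auto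
  moreover have "2 \<le> (if lam \<le> 1 then 1 + 1 / sqrt lam else 1 + sqrt lam)"
  proof (cases "lam \<le> 1")
    case True
    then have "sqrt lam \<le> 1" by simp
    then have "1 \<le> 1 / sqrt lam" using lam0 by (simp add: field_simps)
    then show ?thesis using True by simp
  next
    case False
    then have "1 < sqrt lam" by simp
    then show ?thesis using False by simp
  qed
  ultimately have "e t2 \<le> (if lam \<le> 1 then 1 + 1 / sqrt lam else 1 + sqrt lam) * e t1"
    by (meson mult_right_mono order_trans)
  then show ?thesis unfolding e_def .
qed

end
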